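(* If a connected signed graph $(G,\sigma)$ admits two prime $s$-decompositions $D_1$ and $D_2$, then there are signed graphs $(X,\pi_X)$ and $(Y,\pi_Y)$ with $(G,\sigma)\equiv(X,\pi_X)\,\square\,(Y,\pi_Y)$, $D_1=\{(X,\pi_X)\}\cup D_1'$ and $D_2=\{(X,\pi_X)\}\cup D_2'$, where $D_1'$ and $D_2'$ are $s$-decompositions of $(Y,\pi_Y)$.
   Context: A signed graph $(G,\sigma)$ is a simple loopless undirected graph with a signature $\sigma:E(G)\to\{+1,-1\}$. Switching a vertex negates the signs of its incident edges. Two signed graphs are equivalent ($\equiv$) if there is a graph isomorphism between them carrying one signature to a signature obtained from the other by switching a set of vertices; multiset membership of signed graphs is understood up to $\equiv$. The Cartesian product $(G,\sigma)\,\square\,(H,\pi)$ is the signed graph on $G\,\square\,H$ where $(u,v_1)(u,v_2)$ has sign $\pi(v_1v_2)$ and $(u_1,v)(u_2,v)$ has sign $\sigma(u_1u_2)$. A signed graph is $s$-prime if it is not equivalent to a Cartesian product of two signed graphs each with at least two vertices. An $s$-decomposition of a signed graph $(G,\sigma)$ is a multiset $\{(G_1,\pi_1),\dots,(G_k,\pi_k)\}$ of signed graphs each with at least one edge such that $(G,\sigma)\equiv(G_1,\pi_1)\,\square\cdots\square\,(G_k,\pi_k)$; it is prime if all factors are $s$-prime. *)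

theory Defs
  imports Main "HOL-Library.Multiset"
begin

text \<open>A (finite) signed graph: vertex set, symmetric irreflexive adjacency relation
  (ordered pairs, both orientations present), and a signature on edges.
  Values of sgn off the edges are irrelevant.\<close>
record 'v sgraph =
  verts :: "'v set"
  arcs  :: "('v \<times> 'v) set"
  sgn   :: "'v \<Rightarrow> 'v \<Rightarrow> int"

definition wf_sgraph :: "'v sgraph \<Rightarrow> bool" where
  "wf_sgraph G \<longleftrightarrow> finite (verts G) \<and> arcs G \<subseteq> verts G \<times> verts G
     \<and> (\<forall>u v. (u, v) \<in> arcs G \<longrightarrow> (v, u) \<in> arcs G)
     \<and> (\<forall>u. (u, u) \<notin> arcs G)
     \<and> (\<forall>u v. (u, v) \<in> arcs G \<longrightarrow> sgn G u v \<in> {1, -1} \<and> sgn G u v = sgn G v u)"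

definition sconnected :: "'v sgraph \<Rightarrow> bool" where
  "sconnected G \<longleftrightarrow> verts G \<noteq> {} \<and> (\<forall>u\<in>verts G. \<forall>v\<in>verts G. (u, v) \<in> (arcs G)\<^sup>*)"

definition switch_sign :: "'v set \<Rightarrow> 'v \<Rightarrow> 'v \<Rightarrow> int" where
  "switch_sign S u v = (if (u \<in> S) = (v \<in> S) then 1 else -1)"

definition sequiv :: "'a sgraph \<Rightarrow> 'b sgraph \<Rightarrow> bool" where
  "sequiv G H \<longleftrightarrow> (\<exists>f S. bij_betw f (verts G) (verts H) \<and> S \<subseteq> verts G
     \<and> (\<forall>u\<in>verts G. \<forall>v\<in>verts G. (u, v) \<in> arcs G \<longleftrightarrow> (f u, f v) \<in> arcs H)
     \<and> (\<forall>u v. (u, v) \<in> arcs G \<longrightarrow> sgn H (f u) (f v) = switch_sign S u v * sgn G u v))"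

definition sprod :: "'a sgraph \<Rightarrow> 'b sgraph \<Rightarrow> ('a \<times> 'b) sgraph" where
  "sprod G H = \<lparr> verts = verts G \<times> verts H,
     arcs = {((u, v1), (u, v2)) | u v1 v2. u \<in> verts G \<and> (v1, v2) \<in> arcs H}
          \<union> {((u1, v), (u2, v)) | u1 u2 v. (u1, u2) \<in> arcs G \<and> v \<in> verts H},
     sgn = (\<lambda>(u1, v1) (u2, v2). if u1 = u2 then sgn H v1 v2 else sgn G u1 u2) \<rparr>"

text \<open>Cartesian product of a finite list of signed graphs (vertices are tuples, as lists).
  The empty product is the one-vertex graph.\<close>
definition sprod_list :: "'b sgraph list \<Rightarrow> 'b list sgraph" where
  "sprod_list Gs = \<lparr> verts = {xs. length xs = length Gs \<and> (\<forall>i<length Gs. xs ! i \<in> verts (Gs ! i))},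
     arcs = {(xs, ys). length xs = length Gs \<and> length ys = length Gs
              \<and> (\<forall>i<length Gs. xs ! i \<in> verts (Gs ! i) \<and> ys ! i \<in> verts (Gs ! i))
              \<and> (\<exists>i<length Gs. (xs ! i, ys ! i) \<in> arcs (Gs ! i)
                    \<and> (\<forall>j<length Gs. j \<noteq> i \<longrightarrow> xs ! j = ys ! j))},
     sgn = (\<lambda>xs ys. let i = (LEAST i. i < length Gs \<and> xs ! i \<noteq> ys ! i)
                    in sgn (Gs ! i) (xs ! i) (ys ! i)) \<rparr>"

text \<open>s-prime: not equivalent to a product of two signed graphs with at least two vertices
  each. Since all graphs are finite, factors can be taken with vertices in nat.\<close>
definition s_prime :: "'v sgraph \<Rightarrow> bool" where
  "s_prime G \<longleftrightarrow> wf_sgraph G \<and>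
     \<not> (\<exists>(H :: nat sgraph) (K :: nat sgraph). wf_sgraph H \<and> wf_sgraph K \<and> card (verts H) \<ge> 2 \<and> card (verts K) \<ge> 2
           \<and> sequiv G (sprod H K))"

definition s_decomposition :: "'b sgraph multiset \<Rightarrow> 'a sgraph \<Rightarrow> bool" where
  "s_decomposition D G \<longleftrightarrow> (\<forall>H\<in>#D. wf_sgraph H \<and> arcs H \<noteq> {})
     \<and> (\<exists>Hs. mset Hs = D \<and> sequiv G (sprod_list Hs))"

definition prime_s_decomposition :: "'b sgraph multiset \<Rightarrow> 'a sgraph \<Rightarrow> bool" where
  "prime_s_decomposition D G \<longleftrightarrow> s_decomposition D G \<and> (\<forall>H\<in>#D. s_prime H)"

abbreviation mset_sequiv :: "'b sgraph multiset \<Rightarrow> 'b sgraph multiset \<Rightarrow> bool" where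
  "mset_sequiv M N \<equiv> rel_mset sequiv M N"

end

theory Submission
  imports Defs "HOL-Combinatorics.Combinatorics"
begin

definition closed_sg :: "'v sgraph \<Rightarrow> bool" where
  "closed_sg G \<longleftrightarrow> arcs G \<subseteq> verts G \<times> verts G"

definition sv :: "('a \<Rightarrow> 'b) \<Rightarrow> 'a set \<Rightarrow> 'a sgraph \<Rightarrow> 'b sgraph \<Rightarrow> bool" where
  "sv f S G H \<longleftrightarrow> bij_betw f (verts G) (verts H) \<and> S \<subseteq> verts G
     \<and> (\<forall>u\<in>verts G. \<forall>v\<in>verts G. (u, v) \<in> arcs G \<longleftrightarrow> (f u, f v) \<in> arcs H)
     \<and> (\<forall>u v. (u, v) \<in> arcs G \<longrightarrow> sgn H (f u) (f v) = switch_sign S u v * sgn G u v)"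

lemma sequiv_sv: "sequiv G H \<longleftrightarrow> (\<exists>f S. sv f S G H)"
  unfolding sequiv_def sv_def by blast

lemma wf_closed: "wf_sgraph G \<Longrightarrow> closed_sg G"
  unfolding wf_sgraph_def closed_sg_def by blast

lemma sw_sq: "switch_sign S u v * switch_sign S u v = 1"
  unfolding switch_sign_def by auto

lemma sequiv_refl: "sequiv G G"
proof -
  have "sv id {} G G" unfolding sv_def switch_sign_def by auto
  thus ?thesis using sequiv_sv by blast
qed

lemma sv_sym:
  assumes c: "closed_sg H" and s: "sv f S G H"
  shows "sv (inv_into (verts G) f) (f ` S) H G"
proof -
  let ?g = "inv_into (verts G) f"
  have b: "bij_betw f (verts G) (verts H)" and SS: "S \<subseteq> verts G"
    and ar: "\<forall>u\<in>verts G. \<forall>v\<in>verts G. (u, v) \<in> arcs G \<longleftrightarrow> (f u, f v) \<in> arcs H"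
    and sg: "\<forall>u v. (u, v) \<in> arcs G \<longrightarrow> sgn H (f u) (f v) = switch_sign S u v * sgn G u v"
    using s unfolding sv_def by auto
  have bg: "bij_betw ?g (verts H) (verts G)" using b by (rule bij_betw_inv_into)
  have inj: "inj_on f (verts G)" using b bij_betw_def by blast
  have fg: "\<And>x. x \<in> verts H \<Longrightarrow> f (?g x) = x" using b
    by (meson bij_betw_inv_into_right)
  have gv: "\<And>x. x \<in> verts H \<Longrightarrow> ?g x \<in> verts G" using bg bij_betwE by blast
  have swS: "\<And>u v. u \<in> verts G \<Longrightarrow> v \<in> verts G \<Longrightarrow> switch_sign (f ` S) (f u) (f v) = switch_sign S u v"
  proof -
    fix u v assume "u \<in> verts G" "v \<in> verts G"
    hence "(f u \<in> f ` S) = (u \<in> S)" "(f v \<in> f ` S) = (v \<in> S)"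
      using inj SS by (auto dest: inj_onD)
    thus "switch_sign (f ` S) (f u) (f v) = switch_sign S u v" unfolding switch_sign_def by simp
  qed
  have "\<forall>x\<in>verts H. \<forall>y\<in>verts H. (x, y) \<in> arcs H \<longleftrightarrow> (?g x, ?g y) \<in> arcs G"
    using ar fg gv by metis
  moreover have "\<forall>x y. (x, y) \<in> arcs H \<longrightarrow> sgn G (?g x) (?g y) = switch_sign (f ` S) x y * sgn H x y"
  proof (intro allI impI)
    fix x y assume xy: "(x, y) \<in> arcs H"
    hence xv: "x \<in> verts H" "y \<in> verts H" using c unfolding closed_sg_def by auto
    hence a: "(?g x, ?g y) \<in> arcs G" using ar fg gv xy by metis
    have "sgn H x y = switch_sign S (?g x) (?g y) * sgn G (?g x) (?g y)"
      using sg a fg xv by metis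
    moreover have "switch_sign (f ` S) x y = switch_sign S (?g x) (?g y)"
      using swS[of "?g x" "?g y"] gv fg xv by simp
    ultimately show "sgn G (?g x) (?g y) = switch_sign (f ` S) x y * sgn H x y"
      by (metis (no_types, lifting) mult.assoc mult_1 sw_sq)
  qed
  moreover have "f ` S \<subseteq> verts H" using b SS bij_betwE by blast
  ultimately show ?thesis unfolding sv_def using bg by auto
qed

lemma sequiv_sym: "closed_sg H \<Longrightarrow> sequiv G H \<Longrightarrow> sequiv H G"
  using sv_sym sequiv_sv by metis

lemma sv_trans:
  assumes c: "closed_sg G" and s1: "sv f S G H" and s2: "sv g T H K"
  shows "sv (g \<circ> f) {u \<in> verts G. (u \<in> S) \<noteq> (f u \<in> T)} G K"
proof -
  have b1: "bij_betw f (verts G) (verts H)" and ar1: "\<And>u v. u\<in>verts G \<Longrightarrow> v\<in>verts G \<Longrightarrow> (u, v) \<in> arcs G \<longleftrightarrow> (f u, f v) \<in> arcs H"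
    and sg1: "\<And>u v. (u, v) \<in> arcs G \<Longrightarrow> sgn H (f u) (f v) = switch_sign S u v * sgn G u v"
    using s1 unfolding sv_def by auto
  have b2: "bij_betw g (verts H) (verts K)" and ar2: "\<And>u v. u\<in>verts H \<Longrightarrow> v\<in>verts H \<Longrightarrow> (u, v) \<in> arcs H \<longleftrightarrow> (g u, g v) \<in> arcs K"
    and sg2: "\<And>u v. (u, v) \<in> arcs H \<Longrightarrow> sgn K (g u) (g v) = switch_sign T u v * sgn H u v"
    using s2 unfolding sv_def by auto
  have fv: "\<And>u. u \<in> verts G \<Longrightarrow> f u \<in> verts H" using b1 bij_betwE by blast
  have "bij_betw (g \<circ> f) (verts G) (verts K)" using b1 b2 bij_betw_trans by blast
  moreover have "\<forall>u\<in>verts G. \<forall>v\<in>verts G. (u, v) \<in> arcs G \<longleftrightarrow> ((g \<circ> f) u, (g \<circ> f) v) \<in> arcs K"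
  proof (intro ballI)
    fix u v assume uv: "u \<in> verts G" "v \<in> verts G"
    show "(u, v) \<in> arcs G \<longleftrightarrow> ((g \<circ> f) u, (g \<circ> f) v) \<in> arcs K"
      using ar1[OF uv] ar2[OF fv[OF uv(1)] fv[OF uv(2)]] by simp
  qed
  moreover have "\<forall>u v. (u, v) \<in> arcs G \<longrightarrow> sgn K ((g \<circ> f) u) ((g \<circ> f) v) = switch_sign {u \<in> verts G. (u \<in> S) \<noteq> (f u \<in> T)} u v * sgn G u v"
  proof (intro allI impI)
    fix u v assume a: "(u, v) \<in> arcs G"
    hence uv: "u \<in> verts G" "v \<in> verts G" using c unfolding closed_sg_def by auto
    hence a2: "(f u, f v) \<in> arcs H" using ar1 a by blast
    have e1: "sgn K (g (f u)) (g (f v)) = switch_sign T (f u) (f v) * (switch_sign S u v * sgn G u v)"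
      using sg1[OF a] sg2[OF a2] by simp
    have e2: "switch_sign {u \<in> verts G. (u \<in> S) \<noteq> (f u \<in> T)} u v = switch_sign T (f u) (f v) * switch_sign S u v"
      using uv unfolding switch_sign_def by auto
    show "sgn K ((g \<circ> f) u) ((g \<circ> f) v) = switch_sign {u \<in> verts G. (u \<in> S) \<noteq> (f u \<in> T)} u v * sgn G u v"
      using e1 e2 by simp
  qed
  ultimately show ?thesis unfolding sv_def by auto
qed

lemma sequiv_trans: "closed_sg G \<Longrightarrow> sequiv G H \<Longrightarrow> sequiv H K \<Longrightarrow> sequiv G K"
proof -
  assume c: "closed_sg G" "sequiv G H" "sequiv H K"
  then obtain f S g T where "sv f S G H" "sv g T H K" using sequiv_sv by metis
  thus ?thesis using sv_trans[OF c(1)] sequiv_sv by blast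
qed

definition induce :: "'v sgraph \<Rightarrow> 'v set \<Rightarrow> 'v sgraph" where
  "induce G T = \<lparr> verts = T, arcs = arcs G \<inter> (T \<times> T), sgn = sgn G \<rparr>"

lemma induce_simps[simp]: "verts (induce G T) = T" "arcs (induce G T) = arcs G \<inter> (T \<times> T)"
  "sgn (induce G T) = sgn G"
  unfolding induce_def by auto

lemma closed_induce[simp]: "closed_sg (induce G T)"
  unfolding closed_sg_def by auto

lemma wf_induce: "wf_sgraph G \<Longrightarrow> T \<subseteq> verts G \<Longrightarrow> wf_sgraph (induce G T)"
  unfolding wf_sgraph_def by (auto intro: finite_subset)

lemma sv_induce:
  assumes s: "sv f S G H" and T: "T \<subseteq> verts G"
  shows "sv f (S \<inter> T) (induce G T) (induce H (f ` T))"
proof -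
  have b: "bij_betw f (verts G) (verts H)" and ar: "\<forall>u\<in>verts G. \<forall>v\<in>verts G. (u, v) \<in> arcs G \<longleftrightarrow> (f u, f v) \<in> arcs H"
    and sg: "\<forall>u v. (u, v) \<in> arcs G \<longrightarrow> sgn H (f u) (f v) = switch_sign S u v * sgn G u v"
    using s unfolding sv_def by auto
  have inj: "inj_on f (verts G)" using b bij_betw_def by blast
  have "bij_betw f T (f ` T)" using inj T by (meson bij_betw_imageI inj_on_subset)
  moreover have "\<forall>u\<in>T. \<forall>v\<in>T. (u, v) \<in> arcs G \<inter> T \<times> T \<longleftrightarrow> (f u, f v) \<in> arcs H \<inter> f ` T \<times> f ` T"
    using ar T by auto
  moreover have "\<forall>u v. (u, v) \<in> arcs G \<inter> T \<times> T \<longrightarrow> sgn H (f u) (f v) = switch_sign (S \<inter> T) u v * sgn G u v"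
    using sg unfolding switch_sign_def by auto
  ultimately show ?thesis unfolding sv_def by auto
qed


abbreviation wfall :: "'v sgraph list \<Rightarrow> bool" where
  "wfall Gs \<equiv> (\<forall>G\<in>set Gs. wf_sgraph G)"

lemma wf_irrefl: "wf_sgraph G \<Longrightarrow> (a, b) \<in> arcs G \<Longrightarrow> a \<noteq> b"
  unfolding wf_sgraph_def by blast

lemma wf_symm: "wf_sgraph G \<Longrightarrow> (a, b) \<in> arcs G \<Longrightarrow> (b, a) \<in> arcs G"
  unfolding wf_sgraph_def by blast

lemma wf_arcsV: "wf_sgraph G \<Longrightarrow> (a, b) \<in> arcs G \<Longrightarrow> a \<in> verts G \<and> b \<in> verts G"
  unfolding wf_sgraph_def by blast

lemma sl_verts: "verts (sprod_list Gs) = {xs. length xs = length Gs \<and> (\<forall>i<length Gs. xs ! i \<in> verts (Gs ! i))}"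
  by (simp add: sprod_list_def)

lemma sl_vertsI: "length xs = length Gs \<Longrightarrow> (\<And>i. i<length Gs \<Longrightarrow> xs ! i \<in> verts (Gs ! i)) \<Longrightarrow> xs \<in> verts (sprod_list Gs)"
  by (simp add: sl_verts)

lemma sl_vertsD: "xs \<in> verts (sprod_list Gs) \<Longrightarrow> length xs = length Gs"
  "xs \<in> verts (sprod_list Gs) \<Longrightarrow> i < length Gs \<Longrightarrow> xs ! i \<in> verts (Gs ! i)"
  by (auto simp add: sl_verts)

lemma sl_arcs: "(xs, ys) \<in> arcs (sprod_list Gs) \<longleftrightarrow> xs \<in> verts (sprod_list Gs) \<and> ys \<in> verts (sprod_list Gs)
   \<and> (\<exists>i<length Gs. (xs ! i, ys ! i) \<in> arcs (Gs ! i) \<and> (\<forall>j<length Gs. j \<noteq> i \<longrightarrow> xs ! j = ys ! j))"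
  unfolding sprod_list_def by simp blast

lemma closed_sl: "closed_sg (sprod_list Gs)"
  unfolding closed_sg_def
proof
  fix p assume "p \<in> arcs (sprod_list Gs)"
  then obtain x y where "p = (x, y)" "(x, y) \<in> arcs (sprod_list Gs)" by (cases p) auto
  thus "p \<in> verts (sprod_list Gs) \<times> verts (sprod_list Gs)" unfolding sl_arcs by blast
qed

lemma sl_sgn:
  assumes "length xs = length Gs" "length ys = length Gs" "p < length Gs" "xs ! p \<noteq> ys ! p"
    "\<And>q. q < length Gs \<Longrightarrow> q \<noteq> p \<Longrightarrow> xs ! q = ys ! q"
  shows "sgn (sprod_list Gs) xs ys = sgn (Gs ! p) (xs ! p) (ys ! p)"
proof -
  have "(LEAST i. i < length Gs \<and> xs ! i \<noteq> ys ! i) = p"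
    by (rule Least_equality) (use assms in \<open>auto simp: not_less[symmetric]\<close>)
  thus ?thesis by (simp add: sprod_list_def Let_def)
qed

lemma sl_arc_unique:
  assumes "wfall Gs" "i < length Gs" "(xs ! i, ys ! i) \<in> arcs (Gs ! i)"
  shows "xs ! i \<noteq> ys ! i"
proof -
  have "wf_sgraph (Gs ! i)" using assms(1,2) by simp
  thus ?thesis using assms(3) by (rule wf_irrefl)
qed

lemma wf_sl:
  assumes "wfall Gs"
  shows "wf_sgraph (sprod_list Gs)"
proof -
  let ?P = "sprod_list Gs"
  have "verts ?P \<subseteq> {xs. set xs \<subseteq> \<Union>(verts ` set Gs) \<and> length xs = length Gs}"
  proof
    fix xs assume "xs \<in> verts ?P"
    hence l: "length xs = length Gs" and c: "\<And>i. i < length Gs \<Longrightarrow> xs ! i \<in> verts (Gs ! i)"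
      using sl_vertsD by auto
    have "set xs \<subseteq> \<Union>(verts ` set Gs)"
    proof
      fix x assume "x \<in> set xs"
      then obtain i where "i < length xs" "x = xs ! i" by (metis in_set_conv_nth)
      thus "x \<in> \<Union>(verts ` set Gs)" using c l nth_mem by fastforce
    qed
    thus "xs \<in> {xs. set xs \<subseteq> \<Union>(verts ` set Gs) \<and> length xs = length Gs}" using l by simp
  qed
  moreover have "finite (\<Union>(verts ` set Gs))" using assms unfolding wf_sgraph_def by auto
  ultimately have fin: "finite (verts ?P)" using finite_subset finite_lists_length_eq by blast
  have sym: "\<forall>u v. (u, v) \<in> arcs ?P \<longrightarrow> (v, u) \<in> arcs ?P"
  proof (intro allI impI)
    fix u v assume "(u, v) \<in> arcs ?P"
    then obtain i where i: "i < length Gs" "(u ! i, v ! i) \<in> arcs (Gs ! i)"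
      "\<forall>j<length Gs. j \<noteq> i \<longrightarrow> u ! j = v ! j" and uv: "u \<in> verts ?P" "v \<in> verts ?P"
      unfolding sl_arcs by blast
    have "wf_sgraph (Gs ! i)" using assms i(1) by simp
    hence "(v ! i, u ! i) \<in> arcs (Gs ! i)" using i(2) by (rule wf_symm)
    thus "(v, u) \<in> arcs ?P" unfolding sl_arcs using i uv by metis
  qed
  have irr: "\<forall>u. (u, u) \<notin> arcs ?P"
  proof (intro allI notI)
    fix u assume "(u, u) \<in> arcs ?P"
    then obtain i where i: "i < length Gs" "(u ! i, u ! i) \<in> arcs (Gs ! i)"
      unfolding sl_arcs by blast
    have "wf_sgraph (Gs ! i)" using assms i(1) by simp
    thus False using wf_irrefl[OF _ i(2)] by blast
  qed
  have sg: "\<forall>u v. (u, v) \<in> arcs ?P \<longrightarrow> sgn ?P u v \<in> {1, -1} \<and> sgn ?P u v = sgn ?P v u"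
  proof (intro allI impI)
    fix u v assume a: "(u, v) \<in> arcs ?P"
    then obtain i where i: "i < length Gs" "(u ! i, v ! i) \<in> arcs (Gs ! i)"
      "\<forall>j<length Gs. j \<noteq> i \<longrightarrow> u ! j = v ! j" and uv: "u \<in> verts ?P" "v \<in> verts ?P"
      unfolding sl_arcs by blast
    have w: "wf_sgraph (Gs ! i)" using assms i by simp
    have ne: "u ! i \<noteq> v ! i" using wf_irrefl[OF w i(2)] .
    have e1: "sgn ?P u v = sgn (Gs ! i) (u ! i) (v ! i)"
      by (rule sl_sgn) (use i ne uv sl_vertsD in auto)
    have e2: "sgn ?P v u = sgn (Gs ! i) (v ! i) (u ! i)"
      by (rule sl_sgn) (use i ne uv sl_vertsD in auto)
    show "sgn ?P u v \<in> {1, -1} \<and> sgn ?P u v = sgn ?P v u"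
      using e1 e2 w i(2) unfolding wf_sgraph_def by auto
  qed
  have cl: "arcs ?P \<subseteq> verts ?P \<times> verts ?P" using closed_sl[of Gs] unfolding closed_sg_def .
  show ?thesis unfolding wf_sgraph_def using fin cl sym irr sg by (intro conjI)
qed


lemma sw_empty[simp]: "switch_sign {} u v = 1"
  unfolding switch_sign_def by simp

definition layer :: "'v sgraph list \<Rightarrow> nat \<Rightarrow> 'v list \<Rightarrow> 'v list set" where
  "layer Gs i v = {x \<in> verts (sprod_list Gs). \<forall>k<length Gs. k \<noteq> i \<longrightarrow> x ! k = v ! k}"

definition colayer :: "'v sgraph list \<Rightarrow> nat \<Rightarrow> 'v list \<Rightarrow> 'v list set" where
  "colayer Gs i v = {x \<in> verts (sprod_list Gs). x ! i = v ! i}"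

lemma sl_wf_nth: "wfall Gs \<Longrightarrow> i < length Gs \<Longrightarrow> wf_sgraph (Gs ! i)"
  by simp

lemma sl_arcsE:
  assumes "(xs, ys) \<in> arcs (sprod_list Gs)"
  obtains i where "i < length Gs" "(xs ! i, ys ! i) \<in> arcs (Gs ! i)"
    "\<And>j. j < length Gs \<Longrightarrow> j \<noteq> i \<Longrightarrow> xs ! j = ys ! j"
    "xs \<in> verts (sprod_list Gs)" "ys \<in> verts (sprod_list Gs)"
  using assms unfolding sl_arcs by blast

lemma sl_arcsI:
  assumes "xs \<in> verts (sprod_list Gs)" "ys \<in> verts (sprod_list Gs)" "i < length Gs"
    "(xs ! i, ys ! i) \<in> arcs (Gs ! i)" "\<And>j. j < length Gs \<Longrightarrow> j \<noteq> i \<Longrightarrow> xs ! j = ys ! j"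
  shows "(xs, ys) \<in> arcs (sprod_list Gs)"
  unfolding sl_arcs using assms by blast

lemma layer_iso:
  assumes w: "wfall Gs" and i: "i < length Gs" and v: "v \<in> verts (sprod_list Gs)"
  shows "sv (\<lambda>x. x ! i) {} (induce (sprod_list Gs) (layer Gs i v)) (Gs ! i)"
proof -
  let ?L = "layer Gs i v" and ?P = "sprod_list Gs"
  have lv: "\<And>x. x \<in> ?L \<Longrightarrow> x \<in> verts ?P" unfolding layer_def by blast
  have lk: "\<And>x k. x \<in> ?L \<Longrightarrow> k < length Gs \<Longrightarrow> k \<noteq> i \<Longrightarrow> x ! k = v ! k" unfolding layer_def by blast
  have len: "\<And>x. x \<in> ?L \<Longrightarrow> length x = length Gs" using lv sl_vertsD by blast
  have inj: "inj_on (\<lambda>x. x ! i) ?L"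
  proof (rule inj_onI)
    fix x y assume xy: "x \<in> ?L" "y \<in> ?L" "x ! i = y ! i"
    show "x = y"
    proof (rule nth_equalityI)
      show "length x = length y" using len xy by simp
      fix k assume "k < length x"
      thus "x ! k = y ! k" using xy lk len by (cases "k = i") auto
    qed
  qed
  have img: "(\<lambda>x. x ! i) ` ?L = verts (Gs ! i)"
  proof
    show "(\<lambda>x. x ! i) ` ?L \<subseteq> verts (Gs ! i)" using lv sl_vertsD(2) i by blast
    show "verts (Gs ! i) \<subseteq> (\<lambda>x. x ! i) ` ?L"
    proof
      fix a assume a: "a \<in> verts (Gs ! i)"
      have lvv: "length v = length Gs" using v sl_vertsD by blast
      have "v[i := a] \<in> verts ?P"
        by (rule sl_vertsI) (use i lvv a sl_vertsD(2)[OF v] in \<open>auto simp: nth_list_update\<close>)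
      hence "v[i := a] \<in> ?L" unfolding layer_def by auto
      moreover have "v[i := a] ! i = a" using lvv i by simp
      ultimately show "a \<in> (\<lambda>x. x ! i) ` ?L" by force
    qed
  qed
  have bij: "bij_betw (\<lambda>x. x ! i) ?L (verts (Gs ! i))" using inj img bij_betw_def by blast
  have arc: "\<forall>x\<in>?L. \<forall>y\<in>?L. (x, y) \<in> arcs ?P \<inter> ?L \<times> ?L \<longleftrightarrow> (x ! i, y ! i) \<in> arcs (Gs ! i)"
  proof (intro ballI iffI)
    fix x y assume xy: "x \<in> ?L" "y \<in> ?L" and a: "(x, y) \<in> arcs ?P \<inter> ?L \<times> ?L"
    from a obtain p where p: "p < length Gs" "(x ! p, y ! p) \<in> arcs (Gs ! p)"
      "\<And>j. j < length Gs \<Longrightarrow> j \<noteq> p \<Longrightarrow> x ! j = y ! j" by (auto elim: sl_arcsE)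
    have "p = i"
    proof (rule ccontr)
      assume "p \<noteq> i"
      hence "x ! p = y ! p" using lk xy p(1) by metis
      thus False using sl_arc_unique[OF w p(1), of x y] p(2) by simp
    qed
    thus "(x ! i, y ! i) \<in> arcs (Gs ! i)" using p by simp
  next
    fix x y assume xy: "x \<in> ?L" "y \<in> ?L" and a: "(x ! i, y ! i) \<in> arcs (Gs ! i)"
    have "(x, y) \<in> arcs ?P"
      by (rule sl_arcsI[OF lv[OF xy(1)] lv[OF xy(2)] i a]) (use lk xy in metis)
    thus "(x, y) \<in> arcs ?P \<inter> ?L \<times> ?L" using xy by blast
  qed
  have sg: "\<forall>x y. (x, y) \<in> arcs ?P \<inter> ?L \<times> ?L \<longrightarrow> sgn (Gs ! i) (x ! i) (y ! i) = switch_sign {} x y * sgn ?P x y"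
  proof (intro allI impI)
    fix x y assume a: "(x, y) \<in> arcs ?P \<inter> ?L \<times> ?L"
    hence xy: "x \<in> ?L" "y \<in> ?L" by auto
    hence ai: "(x ! i, y ! i) \<in> arcs (Gs ! i)" using arc a by blast
    have ne: "x ! i \<noteq> y ! i" using sl_arc_unique[OF w i ai] .
    have "sgn ?P x y = sgn (Gs ! i) (x ! i) (y ! i)"
      by (rule sl_sgn) (use len xy i ne lk in metis)+
    thus "sgn (Gs ! i) (x ! i) (y ! i) = switch_sign {} x y * sgn ?P x y" by simp
  qed
  show ?thesis unfolding sv_def using bij arc sg by simp
qed

lemma sp_verts[simp]: "verts (sprod H K) = verts H \<times> verts K"
  by (simp add: sprod_def)

lemma sp_arcs: "((a, r), (b, s)) \<in> arcs (sprod H K) \<longleftrightarrow>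
   (a = b \<and> a \<in> verts H \<and> (r, s) \<in> arcs K) \<or> ((a, b) \<in> arcs H \<and> r = s \<and> r \<in> verts K)"
  by (simp add: sprod_def) blast

lemma sp_sgn: "sgn (sprod H K) (a, r) (b, s) = (if a = b then sgn K r s else sgn H a b)"
  by (simp add: sprod_def)

lemma sl_cons_verts: "(a # r) \<in> verts (sprod_list (A # As)) \<longleftrightarrow> a \<in> verts A \<and> r \<in> verts (sprod_list As)"
  by (simp add: sl_verts All_less_Suc2) blast

lemma sl_cons_form: "x \<in> verts (sprod_list (A # As)) \<Longrightarrow> x = hd x # tl x"
  using sl_vertsD(1)[of x "A # As"] by (cases x) auto

lemma sl_cons_arcs:
  "(a # r, b # s) \<in> arcs (sprod_list (A # As)) \<longleftrightarrow>
     a \<in> verts A \<and> b \<in> verts A \<and> r \<in> verts (sprod_list As) \<and> s \<in> verts (sprod_list As) \<and>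
     (((a, b) \<in> arcs A \<and> r = s) \<or> (a = b \<and> (r, s) \<in> arcs (sprod_list As)))"
  (is "?L \<longleftrightarrow> ?R")
proof
  assume L: ?L
  then obtain i where i: "i < length (A # As)" "((a # r) ! i, (b # s) ! i) \<in> arcs ((A # As) ! i)"
    "\<And>j. j < length (A # As) \<Longrightarrow> j \<noteq> i \<Longrightarrow> (a # r) ! j = (b # s) ! j"
    and v: "a # r \<in> verts (sprod_list (A # As))" "b # s \<in> verts (sprod_list (A # As))"
    by (rule sl_arcsE) (rule that)
  have v2: "a \<in> verts A" "b \<in> verts A" "r \<in> verts (sprod_list As)" "s \<in> verts (sprod_list As)"
    using sl_cons_verts[THEN iffD1, OF v(1)] sl_cons_verts[THEN iffD1, OF v(2)] by simp_all
  have lr: "length r = length As" "length s = length As" using v2 sl_vertsD by blast+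
  show ?R
  proof (cases i)
    case 0
    have "r = s"
    proof (rule nth_equalityI)
      show "length r = length s" using lr by simp
      fix j assume "j < length r"
      thus "r ! j = s ! j" using i(3)[of "Suc j"] lr 0 by simp
    qed
    thus ?thesis using v2 i(2) 0 by simp
  next
    case (Suc k)
    have ab: "a = b" using i(3)[of 0] Suc by simp
    have "(r, s) \<in> arcs (sprod_list As)"
    proof (rule sl_arcsI[OF v2(3,4)])
      show "k < length As" using i(1) Suc by simp
      show "(r ! k, s ! k) \<in> arcs (As ! k)" using i(2) Suc by simp
      fix j assume "j < length As" "j \<noteq> k"
      thus "r ! j = s ! j" using i(3)[of "Suc j"] Suc by simp
    qed
    thus ?thesis using v2 ab by simp
  qed
next
  assume R: ?R
  hence v: "a # r \<in> verts (sprod_list (A # As))" "b # s \<in> verts (sprod_list (A # As))"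
    using sl_cons_verts[of a r A As] sl_cons_verts[of b s A As] by simp_all
  have lr: "length r = length As" "length s = length As" using R sl_vertsD by blast+
  from R consider "(a, b) \<in> arcs A" "r = s" | "a = b" "(r, s) \<in> arcs (sprod_list As)" by blast
  thus ?L
  proof cases
    case 1
    show ?thesis
    proof (rule sl_arcsI[OF v, of 0])
      fix j assume "j < length (A # As)" "j \<noteq> 0"
      thus "(a # r) ! j = (b # s) ! j" using 1 by (cases j) auto
    qed (use 1 in auto)
  next
    case 2
    from 2(2) obtain k where k: "k < length As" "(r ! k, s ! k) \<in> arcs (As ! k)"
      "\<And>j. j < length As \<Longrightarrow> j \<noteq> k \<Longrightarrow> r ! j = s ! j" by (rule sl_arcsE) (rule that)
    show ?thesis
    proof (rule sl_arcsI[OF v, of "Suc k"])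
      fix j assume "j < length (A # As)" "j \<noteq> Suc k"
      thus "(a # r) ! j = (b # s) ! j" using 2 k by (cases j) auto
    qed (use k in auto)
  qed
qed

lemma split_iso:
  assumes wA: "wf_sgraph A" and w: "wfall As"
  shows "sv (\<lambda>x. (hd x, tl x)) {} (sprod_list (A # As)) (sprod A (sprod_list As))"
proof -
  let ?P = "sprod_list (A # As)" and ?R = "sprod_list As" and ?f = "\<lambda>x. (hd x, tl x)"
  have bij: "bij_betw ?f (verts ?P) (verts (sprod A ?R))"
  proof (rule bij_betw_byWitness[where f' = "\<lambda>(a, r). a # r"])
    show "\<forall>x\<in>verts ?P. (\<lambda>(a, r). a # r) (?f x) = x" using sl_cons_form by (metis case_prod_conv)
    show "\<forall>y\<in>verts (sprod A ?R). ?f ((\<lambda>(a, r). a # r) y) = y" by auto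
    show "?f ` verts ?P \<subseteq> verts (sprod A ?R)"
    proof
      fix y assume "y \<in> ?f ` verts ?P"
      then obtain x where x: "x \<in> verts ?P" "y = ?f x" by blast
      hence "hd x # tl x \<in> verts ?P" using sl_cons_form by metis
      thus "y \<in> verts (sprod A ?R)" using x unfolding sl_cons_verts by simp
    qed
    show "(\<lambda>(a, r). a # r) ` verts (sprod A ?R) \<subseteq> verts ?P" by (auto simp: sl_cons_verts)
  qed
  have arc: "\<forall>x\<in>verts ?P. \<forall>y\<in>verts ?P. (x, y) \<in> arcs ?P \<longleftrightarrow> (?f x, ?f y) \<in> arcs (sprod A ?R)"
  proof (intro ballI)
    fix x y assume xy: "x \<in> verts ?P" "y \<in> verts ?P"
    obtain a r b s where e: "x = a # r" "y = b # s" using sl_cons_form xy by metis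
    have v: "a \<in> verts A" "b \<in> verts A" "r \<in> verts ?R" "s \<in> verts ?R"
      using xy unfolding e sl_cons_verts by simp_all
    show "(x, y) \<in> arcs ?P \<longleftrightarrow> (?f x, ?f y) \<in> arcs (sprod A ?R)"
      unfolding e using v by (simp add: sl_cons_arcs sp_arcs) blast
  qed
  have sg: "\<forall>x y. (x, y) \<in> arcs ?P \<longrightarrow> sgn (sprod A ?R) (?f x) (?f y) = switch_sign {} x y * sgn ?P x y"
  proof (intro allI impI)
    fix x y assume a: "(x, y) \<in> arcs ?P"
    hence xy: "x \<in> verts ?P" "y \<in> verts ?P" using closed_sl[of "A # As"] unfolding closed_sg_def by auto
    obtain a r b s where e: "x = a # r" "y = b # s" using sl_cons_form xy by metis
    have "r \<in> verts ?R" "s \<in> verts ?R" using xy unfolding e sl_cons_verts by simp_all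
    hence lr: "length r = length As" "length s = length As" using sl_vertsD(1) by blast+
    from a[unfolded e sl_cons_arcs] consider "(a, b) \<in> arcs A" "r = s" | "a = b" "(r, s) \<in> arcs ?R" by blast
    thus "sgn (sprod A ?R) (?f x) (?f y) = switch_sign {} x y * sgn ?P x y"
    proof cases
      case 1
      have ne: "a \<noteq> b" using wf_irrefl[OF wA 1(1)] .
      have "sgn ?P x y = sgn ((A # As) ! 0) ((a # r) ! 0) ((b # s) ! 0)"
        unfolding e by (rule sl_sgn) (use lr ne 1 in \<open>auto simp: nth_Cons split: nat.splits\<close>)
      thus ?thesis using ne unfolding e by (simp add: sp_sgn)
    next
      case 2
      from 2(2) obtain k where k: "k < length As" "(r ! k, s ! k) \<in> arcs (As ! k)"
        "\<And>j. j < length As \<Longrightarrow> j \<noteq> k \<Longrightarrow> r ! j = s ! j" by (rule sl_arcsE) (rule that)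
      have ne: "r ! k \<noteq> s ! k" using sl_arc_unique[OF w k(1,2)] .
      have e1: "sgn ?P x y = sgn ((A # As) ! Suc k) ((a # r) ! Suc k) ((b # s) ! Suc k)"
        unfolding e by (rule sl_sgn) (use lr ne 2 k in \<open>auto simp: nth_Cons split: nat.splits\<close>)
      have e2: "sgn ?R r s = sgn (As ! k) (r ! k) (s ! k)"
        by (rule sl_sgn) (use lr ne k in auto)
      show ?thesis using e1 e2 2 unfolding e by (simp add: sp_sgn)
    qed
  qed
  show ?thesis unfolding sv_def using bij arc sg by simp
qed


lemma pl_nth: "\<sigma> permutes {..<length Gs} \<Longrightarrow> length x = length Gs \<Longrightarrow> k < length Gs \<Longrightarrow> permute_list \<sigma> x ! k = x ! \<sigma> k"
  using permute_list_nth[of \<sigma> x k] by simp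

lemma perm_lt: "\<sigma> permutes {..<n} \<Longrightarrow> k < n \<Longrightarrow> \<sigma> k < n"
  using permutes_in_image[of \<sigma> "{..<n}" k] by simp

lemma perm_iso:
  assumes s: "\<sigma> permutes {..<length Gs}" and w: "wfall Gs"
  shows "sv (permute_list \<sigma>) {} (sprod_list Gs) (sprod_list (permute_list \<sigma> Gs))"
proof -
  let ?n = "length Gs" and ?P = "sprod_list Gs" and ?Q = "sprod_list (permute_list \<sigma> Gs)"
  let ?\<tau> = "inv \<sigma>"
  have t: "?\<tau> permutes {..<?n}" using permutes_inv[OF s] .
  have st: "\<And>k. \<sigma> (?\<tau> k) = k" and ts: "\<And>k. ?\<tau> (\<sigma> k) = k" using permutes_inverses[OF s] by auto
  have sl: "\<And>k. k < ?n \<Longrightarrow> \<sigma> k < ?n" using perm_lt[OF s] .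
  have tl: "\<And>k. k < ?n \<Longrightarrow> ?\<tau> k < ?n" using perm_lt[OF t] .
  have gn: "\<And>k. k < ?n \<Longrightarrow> permute_list \<sigma> Gs ! k = Gs ! \<sigma> k" using pl_nth[OF s refl] by simp
  have lq: "length (permute_list \<sigma> Gs) = ?n" by simp
  have t': "?\<tau> permutes {..<length (permute_list \<sigma> Gs)}" using t by simp
  have PV: "\<And>x. x \<in> verts ?P \<Longrightarrow> permute_list \<sigma> x \<in> verts ?Q"
  proof -
    fix x assume x: "x \<in> verts ?P"
    have l: "length x = ?n" using sl_vertsD(1)[OF x] .
    show "permute_list \<sigma> x \<in> verts ?Q"
      by (rule sl_vertsI) (use l x sl_vertsD(2)[OF x] sl gn pl_nth[OF s l] in auto)
  qed
  have QV: "\<And>y. y \<in> verts ?Q \<Longrightarrow> permute_list ?\<tau> y \<in> verts ?P"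
  proof -
    fix y assume y: "y \<in> verts ?Q"
    have l: "length y = ?n" using sl_vertsD(1)[OF y] by simp
    have "\<And>k. k < ?n \<Longrightarrow> y ! ?\<tau> k \<in> verts (Gs ! k)"
    proof -
      fix k assume k: "k < ?n"
      have "y ! ?\<tau> k \<in> verts (permute_list \<sigma> Gs ! ?\<tau> k)" using sl_vertsD(2)[OF y] tl[OF k] by simp
      thus "y ! ?\<tau> k \<in> verts (Gs ! k)" using gn[OF tl[OF k]] st by simp
    qed
    thus "permute_list ?\<tau> y \<in> verts ?P"
      by (intro sl_vertsI) (use l pl_nth[OF t l] in auto)
  qed
  have inv1: "\<And>x. x \<in> verts ?P \<Longrightarrow> permute_list ?\<tau> (permute_list \<sigma> x) = x"
  proof -
    fix x assume x: "x \<in> verts ?P"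
    have l: "length x = ?n" using sl_vertsD(1)[OF x] .
    show "permute_list ?\<tau> (permute_list \<sigma> x) = x"
    proof (rule nth_equalityI)
      show "length (permute_list ?\<tau> (permute_list \<sigma> x)) = length x" by simp
      fix k assume "k < length (permute_list ?\<tau> (permute_list \<sigma> x))"
      hence k: "k < ?n" using l by simp
      have "permute_list ?\<tau> (permute_list \<sigma> x) ! k = permute_list \<sigma> x ! ?\<tau> k"
        using pl_nth[OF t _ k, of "permute_list \<sigma> x"] l by simp
      also have "\<dots> = x ! k" using pl_nth[OF s l tl[OF k]] st by simp
      finally show "permute_list ?\<tau> (permute_list \<sigma> x) ! k = x ! k" .
    qed
  qed
  have inv2: "\<And>y. y \<in> verts ?Q \<Longrightarrow> permute_list \<sigma> (permute_list ?\<tau> y) = y"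
  proof -
    fix y assume y: "y \<in> verts ?Q"
    have l: "length y = ?n" using sl_vertsD(1)[OF y] by simp
    show "permute_list \<sigma> (permute_list ?\<tau> y) = y"
    proof (rule nth_equalityI)
      show "length (permute_list \<sigma> (permute_list ?\<tau> y)) = length y" by simp
      fix k assume "k < length (permute_list \<sigma> (permute_list ?\<tau> y))"
      hence k: "k < ?n" using l by simp
      have "permute_list \<sigma> (permute_list ?\<tau> y) ! k = permute_list ?\<tau> y ! \<sigma> k"
        using pl_nth[OF s _ k, of "permute_list ?\<tau> y"] l by simp
      also have "\<dots> = y ! k" using pl_nth[OF t l sl[OF k]] ts by simp
      finally show "permute_list \<sigma> (permute_list ?\<tau> y) ! k = y ! k" .
    qed
  qed
  have bij: "bij_betw (permute_list \<sigma>) (verts ?P) (verts ?Q)"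
    by (rule bij_betw_byWitness[where f' = "permute_list ?\<tau>"]) (use inv1 inv2 PV QV in auto)
  have arc: "\<forall>x\<in>verts ?P. \<forall>y\<in>verts ?P. (x, y) \<in> arcs ?P \<longleftrightarrow> (permute_list \<sigma> x, permute_list \<sigma> y) \<in> arcs ?Q"
  proof (intro ballI iffI)
    fix x y assume x: "x \<in> verts ?P" and y: "y \<in> verts ?P" and a: "(x, y) \<in> arcs ?P"
    have lx: "length x = ?n" and ly: "length y = ?n" using sl_vertsD(1) x y by auto
    from a obtain p where p: "p < ?n" "(x ! p, y ! p) \<in> arcs (Gs ! p)"
      "\<And>j. j < ?n \<Longrightarrow> j \<noteq> p \<Longrightarrow> x ! j = y ! j" by (rule sl_arcsE) (rule that)
    show "(permute_list \<sigma> x, permute_list \<sigma> y) \<in> arcs ?Q"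
    proof (rule sl_arcsI[OF PV[OF x] PV[OF y], of "?\<tau> p"])
      show "?\<tau> p < length (permute_list \<sigma> Gs)" using tl[OF p(1)] by simp
      show "(permute_list \<sigma> x ! ?\<tau> p, permute_list \<sigma> y ! ?\<tau> p) \<in> arcs (permute_list \<sigma> Gs ! ?\<tau> p)"
        using p(2) pl_nth[OF s lx tl[OF p(1)]] pl_nth[OF s ly tl[OF p(1)]] gn[OF tl[OF p(1)]] st by simp
      fix j assume j: "j < length (permute_list \<sigma> Gs)" "j \<noteq> ?\<tau> p"
      hence "\<sigma> j \<noteq> p" using ts by metis
      thus "permute_list \<sigma> x ! j = permute_list \<sigma> y ! j"
        using p(3)[OF sl] j pl_nth[OF s lx] pl_nth[OF s ly] by simp
    qed
  next
    fix x y assume x: "x \<in> verts ?P" and y: "y \<in> verts ?P" and a: "(permute_list \<sigma> x, permute_list \<sigma> y) \<in> arcs ?Q"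
    have lx: "length x = ?n" and ly: "length y = ?n" using sl_vertsD(1) x y by auto
    from a obtain q where q: "q < length (permute_list \<sigma> Gs)"
      "(permute_list \<sigma> x ! q, permute_list \<sigma> y ! q) \<in> arcs (permute_list \<sigma> Gs ! q)"
      "\<And>j. j < length (permute_list \<sigma> Gs) \<Longrightarrow> j \<noteq> q \<Longrightarrow> permute_list \<sigma> x ! j = permute_list \<sigma> y ! j"
      by (rule sl_arcsE) (rule that)
    have qn: "q < ?n" using q(1) by simp
    show "(x, y) \<in> arcs ?P"
    proof (rule sl_arcsI[OF x y, of "\<sigma> q"])
      show "\<sigma> q < ?n" using sl[OF qn] .
      show "(x ! \<sigma> q, y ! \<sigma> q) \<in> arcs (Gs ! \<sigma> q)"
        using q(2) pl_nth[OF s lx qn] pl_nth[OF s ly qn] gn[OF qn] by simp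
      fix j assume j: "j < ?n" "j \<noteq> \<sigma> q"
      hence "?\<tau> j \<noteq> q" using st by metis
      hence "permute_list \<sigma> x ! ?\<tau> j = permute_list \<sigma> y ! ?\<tau> j" using q(3) tl[OF j(1)] by simp
      thus "x ! j = y ! j" using pl_nth[OF s lx tl[OF j(1)]] pl_nth[OF s ly tl[OF j(1)]] st by simp
    qed
  qed
  have sg: "\<forall>x y. (x, y) \<in> arcs ?P \<longrightarrow> sgn ?Q (permute_list \<sigma> x) (permute_list \<sigma> y) = switch_sign {} x y * sgn ?P x y"
  proof (intro allI impI)
    fix x y assume a: "(x, y) \<in> arcs ?P"
    from a obtain p where p: "p < ?n" "(x ! p, y ! p) \<in> arcs (Gs ! p)"
      "\<And>j. j < ?n \<Longrightarrow> j \<noteq> p \<Longrightarrow> x ! j = y ! j" and x: "x \<in> verts ?P" and y: "y \<in> verts ?P"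
      by (rule sl_arcsE) (rule that)
    have lx: "length x = ?n" and ly: "length y = ?n" using sl_vertsD(1) x y by auto
    have ne: "x ! p \<noteq> y ! p" using sl_arc_unique[OF w p(1,2)] .
    have e1: "sgn ?P x y = sgn (Gs ! p) (x ! p) (y ! p)"
      by (rule sl_sgn) (use lx ly p ne in auto)
    have e2: "sgn ?Q (permute_list \<sigma> x) (permute_list \<sigma> y) = sgn (permute_list \<sigma> Gs ! ?\<tau> p) (permute_list \<sigma> x ! ?\<tau> p) (permute_list \<sigma> y ! ?\<tau> p)"
    proof (rule sl_sgn)
      show "length (permute_list \<sigma> x) = length (permute_list \<sigma> Gs)" using lx by simp
      show "length (permute_list \<sigma> y) = length (permute_list \<sigma> Gs)" using ly by simp
      show "?\<tau> p < length (permute_list \<sigma> Gs)" using tl[OF p(1)] by simp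
      show "permute_list \<sigma> x ! ?\<tau> p \<noteq> permute_list \<sigma> y ! ?\<tau> p"
        using ne pl_nth[OF s lx tl[OF p(1)]] pl_nth[OF s ly tl[OF p(1)]] st by simp
      fix j assume j: "j < length (permute_list \<sigma> Gs)" "j \<noteq> ?\<tau> p"
      hence "\<sigma> j \<noteq> p" using ts by metis
      thus "permute_list \<sigma> x ! j = permute_list \<sigma> y ! j"
        using p(3)[OF sl] j pl_nth[OF s lx] pl_nth[OF s ly] by simp
    qed
    show "sgn ?Q (permute_list \<sigma> x) (permute_list \<sigma> y) = switch_sign {} x y * sgn ?P x y"
      using e1 e2 pl_nth[OF s lx tl[OF p(1)]] pl_nth[OF s ly tl[OF p(1)]] gn[OF tl[OF p(1)]] st by simp
  qed
  show ?thesis unfolding sv_def using bij arc sg by simp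
qed


lemma sp_arcsE:
  assumes "(x, y) \<in> arcs (sprod H K)"
  obtains a r s where "x = (a, r)" "y = (a, s)" "a \<in> verts H" "(r, s) \<in> arcs K"
  | a b r where "x = (a, r)" "y = (b, r)" "(a, b) \<in> arcs H" "r \<in> verts K"
proof -
  obtain a r b s where e: "x = (a, r)" "y = (b, s)" by (cases x, cases y) auto
  from assms[unfolded e sp_arcs] consider "a = b" "a \<in> verts H" "(r, s) \<in> arcs K"
    | "(a, b) \<in> arcs H" "r = s" "r \<in> verts K" by blast
  thus ?thesis using that e by cases auto
qed

lemma wf_sprod:
  assumes wH: "wf_sgraph H" and wK: "wf_sgraph K"
  shows "wf_sgraph (sprod H K)"
proof -
  let ?S = "sprod H K"
  have fin: "finite (verts ?S)" using wH wK unfolding wf_sgraph_def by simp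
  have cl: "arcs ?S \<subseteq> verts ?S \<times> verts ?S"
  proof
    fix p assume "p \<in> arcs ?S"
    then obtain x y where p: "p = (x, y)" "(x, y) \<in> arcs ?S" by (cases p) auto
    from p(2) show "p \<in> verts ?S \<times> verts ?S"
    proof (rule sp_arcsE)
      fix a r s assume "x = (a, r)" "y = (a, s)" "a \<in> verts H" "(r, s) \<in> arcs K"
      thus ?thesis using p(1) wf_arcsV[OF wK] by auto
    next
      fix a b r assume "x = (a, r)" "y = (b, r)" "(a, b) \<in> arcs H" "r \<in> verts K"
      thus ?thesis using p(1) wf_arcsV[OF wH] by auto
    qed
  qed
  have sym: "\<forall>x y. (x, y) \<in> arcs ?S \<longrightarrow> (y, x) \<in> arcs ?S"
  proof (intro allI impI)
    fix x y assume "(x, y) \<in> arcs ?S"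
    thus "(y, x) \<in> arcs ?S"
    proof (rule sp_arcsE)
      fix a r s assume "x = (a, r)" "y = (a, s)" "a \<in> verts H" "(r, s) \<in> arcs K"
      thus ?thesis using wf_symm[OF wK] by (simp add: sp_arcs)
    next
      fix a b r assume "x = (a, r)" "y = (b, r)" "(a, b) \<in> arcs H" "r \<in> verts K"
      thus ?thesis using wf_symm[OF wH] by (simp add: sp_arcs)
    qed
  qed
  have irr: "\<forall>x. (x, x) \<notin> arcs ?S"
  proof (intro allI notI)
    fix x assume "(x, x) \<in> arcs ?S"
    thus False by (rule sp_arcsE) (use wf_irrefl[OF wH] wf_irrefl[OF wK] in auto)
  qed
  have sg: "\<forall>x y. (x, y) \<in> arcs ?S \<longrightarrow> sgn ?S x y \<in> {1, -1} \<and> sgn ?S x y = sgn ?S y x"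
  proof (intro allI impI)
    fix x y assume "(x, y) \<in> arcs ?S"
    thus "sgn ?S x y \<in> {1, -1} \<and> sgn ?S x y = sgn ?S y x"
    proof (rule sp_arcsE)
      fix a r s assume e: "x = (a, r)" "y = (a, s)" "(r, s) \<in> arcs K"
      thus ?thesis using wK unfolding wf_sgraph_def by (simp add: sp_sgn)
    next
      fix a b r assume e: "x = (a, r)" "y = (b, r)" "(a, b) \<in> arcs H"
      have "a \<noteq> b" using wf_irrefl[OF wH e(3)] .
      thus ?thesis using wH e unfolding wf_sgraph_def by (simp add: sp_sgn)
    qed
  qed
  show ?thesis unfolding wf_sgraph_def using fin cl sym irr sg by (intro conjI)
qed

lemma klayer_iso:
  assumes wH: "wf_sgraph H" and a: "a \<in> verts H"
  shows "sv snd {} (induce (sprod H K) ({a} \<times> verts K)) K"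
proof -
  let ?T = "{a} \<times> verts K"
  have bij: "bij_betw snd ?T (verts K)"
    by (rule bij_betw_byWitness[where f' = "\<lambda>r. (a, r)"]) auto
  have arc: "\<forall>x\<in>?T. \<forall>y\<in>?T. (x, y) \<in> arcs (sprod H K) \<inter> ?T \<times> ?T \<longleftrightarrow> (snd x, snd y) \<in> arcs K"
    using a wf_irrefl[OF wH] by (auto simp: sp_arcs)
  have sg: "\<forall>x y. (x, y) \<in> arcs (sprod H K) \<inter> ?T \<times> ?T \<longrightarrow> sgn K (snd x) (snd y) = switch_sign {} x y * sgn (sprod H K) x y"
    by (auto simp: sp_sgn)
  show ?thesis unfolding sv_def using bij arc sg by simp
qed

lemma sprod_cong:
  assumes wH: "wf_sgraph H" and wK: "wf_sgraph K" and s1: "sv f S H H'" and s2: "sv g T K K'"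
  shows "sv (map_prod f g) {(a, r). a \<in> verts H \<and> r \<in> verts K \<and> (a \<in> S) \<noteq> (r \<in> T)} (sprod H K) (sprod H' K')"
proof -
  have b1: "bij_betw f (verts H) (verts H')" and S: "S \<subseteq> verts H" and ar1: "\<And>u v. u\<in>verts H \<Longrightarrow> v\<in>verts H \<Longrightarrow> (u, v) \<in> arcs H \<longleftrightarrow> (f u, f v) \<in> arcs H'"
    and sg1: "\<And>u v. (u, v) \<in> arcs H \<Longrightarrow> sgn H' (f u) (f v) = switch_sign S u v * sgn H u v"
    using s1 unfolding sv_def by auto
  have b2: "bij_betw g (verts K) (verts K')" and T: "T \<subseteq> verts K" and ar2: "\<And>u v. u\<in>verts K \<Longrightarrow> v\<in>verts K \<Longrightarrow> (u, v) \<in> arcs K \<longleftrightarrow> (g u, g v) \<in> arcs K'"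
    and sg2: "\<And>u v. (u, v) \<in> arcs K \<Longrightarrow> sgn K' (g u) (g v) = switch_sign T u v * sgn K u v"
    using s2 unfolding sv_def by auto
  have i1: "inj_on f (verts H)" using b1 bij_betw_def by blast
  have i2: "inj_on g (verts K)" using b2 bij_betw_def by blast
  have fv: "\<And>a. a \<in> verts H \<Longrightarrow> f a \<in> verts H'" using b1 bij_betwE by blast
  have gv: "\<And>a. a \<in> verts K \<Longrightarrow> g a \<in> verts K'" using b2 bij_betwE by blast
  let ?W = "{(a, r). a \<in> verts H \<and> r \<in> verts K \<and> (a \<in> S) \<noteq> (r \<in> T)}"
  have bij: "bij_betw (map_prod f g) (verts (sprod H K)) (verts (sprod H' K'))"
    using bij_betw_map_prod[OF b1 b2] by simp
  have arc: "\<forall>x\<in>verts (sprod H K). \<forall>y\<in>verts (sprod H K). (x, y) \<in> arcs (sprod H K) \<longleftrightarrow> (map_prod f g x, map_prod f g y) \<in> arcs (sprod H' K')"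
  proof (intro ballI)
    fix x y assume x: "x \<in> verts (sprod H K)" and y: "y \<in> verts (sprod H K)"
    obtain a r b s where e: "x = (a, r)" "y = (b, s)" by (cases x, cases y) auto
    have v: "a \<in> verts H" "r \<in> verts K" "b \<in> verts H" "s \<in> verts K" using x y e by auto
    have "(f a = f b) = (a = b)" using i1 v by (meson inj_onD)
    moreover have "(g r = g s) = (r = s)" using i2 v by (meson inj_onD)
    ultimately show "(x, y) \<in> arcs (sprod H K) \<longleftrightarrow> (map_prod f g x, map_prod f g y) \<in> arcs (sprod H' K')"
      unfolding e using v fv gv ar1[of a b] ar2[of r s] by (simp add: sp_arcs)
  qed
  have sg: "\<forall>x y. (x, y) \<in> arcs (sprod H K) \<longrightarrow> sgn (sprod H' K') (map_prod f g x) (map_prod f g y) = switch_sign ?W x y * sgn (sprod H K) x y"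
  proof (intro allI impI)
    fix x y assume "(x, y) \<in> arcs (sprod H K)"
    thus "sgn (sprod H' K') (map_prod f g x) (map_prod f g y) = switch_sign ?W x y * sgn (sprod H K) x y"
    proof (rule sp_arcsE)
      fix a r s assume e: "x = (a, r)" "y = (a, s)" "a \<in> verts H" "(r, s) \<in> arcs K"
      have rs: "r \<in> verts K" "s \<in> verts K" using wf_arcsV[OF wK e(4)] by auto
      have "switch_sign ?W x y = switch_sign T r s" using e(1-3) rs unfolding switch_sign_def by auto
      thus ?thesis using e sg2[OF e(4)] by (simp add: sp_sgn)
    next
      fix a b r assume e: "x = (a, r)" "y = (b, r)" "(a, b) \<in> arcs H" "r \<in> verts K"
      have ab: "a \<in> verts H" "b \<in> verts H" using wf_arcsV[OF wH e(3)] by auto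
      have ne: "a \<noteq> b" using wf_irrefl[OF wH e(3)] .
      hence ne': "f a \<noteq> f b" using i1 ab by (meson inj_onD)
      have "switch_sign ?W x y = switch_sign S a b" using e(1,2,4) ab unfolding switch_sign_def by auto
      thus ?thesis using e sg1[OF e(3)] ne ne' by (simp add: sp_sgn)
    qed
  qed
  have "?W \<subseteq> verts (sprod H K)" by auto
  thus ?thesis unfolding sv_def using bij arc sg by blast
qed


lemma box_iso:
  assumes w: "wfall Gs" and U: "\<And>k. k < length Gs \<Longrightarrow> U k \<subseteq> verts (Gs ! k)"
  shows "sv id {} (induce (sprod_list Gs) {z \<in> verts (sprod_list Gs). \<forall>k<length Gs. z ! k \<in> U k})
            (sprod_list (map (\<lambda>k. induce (Gs ! k) (U k)) [0..<length Gs]))"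
proof -
  let ?n = "length Gs" and ?B = "{z \<in> verts (sprod_list Gs). \<forall>k<length Gs. z ! k \<in> U k}"
  let ?Cs = "map (\<lambda>k. induce (Gs ! k) (U k)) [0..<length Gs]"
  have lc: "length ?Cs = ?n" by simp
  have cn: "\<And>k. k < ?n \<Longrightarrow> ?Cs ! k = induce (Gs ! k) (U k)" by simp
  have VB: "verts (sprod_list ?Cs) = ?B"
  proof
    show "verts (sprod_list ?Cs) \<subseteq> ?B"
    proof
      fix z assume z: "z \<in> verts (sprod_list ?Cs)"
      have l: "length z = ?n" using sl_vertsD(1)[OF z] by simp
      have c: "\<And>k. k < ?n \<Longrightarrow> z ! k \<in> U k" using sl_vertsD(2)[OF z] by simp
      have "z \<in> verts (sprod_list Gs)" by (rule sl_vertsI) (use l c U in auto)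
      thus "z \<in> ?B" using c by simp
    qed
    show "?B \<subseteq> verts (sprod_list ?Cs)"
    proof
      fix z assume z: "z \<in> ?B"
      hence l: "length z = ?n" using sl_vertsD(1) by blast
      show "z \<in> verts (sprod_list ?Cs)" by (rule sl_vertsI) (use l z in auto)
    qed
  qed
  have bij: "bij_betw id ?B (verts (sprod_list ?Cs))" using VB by simp
  have arc: "\<forall>x\<in>?B. \<forall>y\<in>?B. (x, y) \<in> arcs (sprod_list Gs) \<inter> ?B \<times> ?B \<longleftrightarrow> (id x, id y) \<in> arcs (sprod_list ?Cs)"
  proof (intro ballI iffI)
    fix x y assume x: "x \<in> ?B" and y: "y \<in> ?B" and a: "(x, y) \<in> arcs (sprod_list Gs) \<inter> ?B \<times> ?B"
    from a obtain p where p: "p < ?n" "(x ! p, y ! p) \<in> arcs (Gs ! p)"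
      "\<And>j. j < ?n \<Longrightarrow> j \<noteq> p \<Longrightarrow> x ! j = y ! j" by (auto elim!: sl_arcsE)
    show "(id x, id y) \<in> arcs (sprod_list ?Cs)"
      unfolding id_def by (rule sl_arcsI[of _ _ _ p]) (use x y VB p in auto)
  next
    fix x y assume x: "x \<in> ?B" and y: "y \<in> ?B" and a: "(id x, id y) \<in> arcs (sprod_list ?Cs)"
    from a obtain p where p: "p < length ?Cs" "(x ! p, y ! p) \<in> arcs (?Cs ! p)"
      "\<And>j. j < length ?Cs \<Longrightarrow> j \<noteq> p \<Longrightarrow> x ! j = y ! j" by (auto elim!: sl_arcsE)
    have "(x, y) \<in> arcs (sprod_list Gs)"
      by (rule sl_arcsI[of _ _ _ p]) (use x y p in auto)
    thus "(x, y) \<in> arcs (sprod_list Gs) \<inter> ?B \<times> ?B" using x y by blast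
  qed
  have sg: "\<forall>x y. (x, y) \<in> arcs (sprod_list Gs) \<inter> ?B \<times> ?B \<longrightarrow> sgn (sprod_list ?Cs) (id x) (id y) = switch_sign {} x y * sgn (induce (sprod_list Gs) ?B) x y"
  proof (intro allI impI)
    fix x y assume a: "(x, y) \<in> arcs (sprod_list Gs) \<inter> ?B \<times> ?B"
    then obtain p where p: "p < ?n" "(x ! p, y ! p) \<in> arcs (Gs ! p)"
      "\<And>j. j < ?n \<Longrightarrow> j \<noteq> p \<Longrightarrow> x ! j = y ! j" and xv: "x \<in> verts (sprod_list Gs)" and yv: "y \<in> verts (sprod_list Gs)"
      by (auto elim!: sl_arcsE)
    have lx: "length x = ?n" "length y = ?n" using xv yv sl_vertsD(1) by auto
    have ne: "x ! p \<noteq> y ! p" using sl_arc_unique[OF w p(1,2)] .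
    have e1: "sgn (sprod_list Gs) x y = sgn (Gs ! p) (x ! p) (y ! p)"
      by (rule sl_sgn) (use lx p ne in auto)
    have e2: "sgn (sprod_list ?Cs) x y = sgn (?Cs ! p) (x ! p) (y ! p)"
      by (rule sl_sgn) (use lx p ne in auto)
    show "sgn (sprod_list ?Cs) (id x) (id y) = switch_sign {} x y * sgn (induce (sprod_list Gs) ?B) x y"
      using e1 e2 cn[OF p(1)] by simp
  qed
  show ?thesis unfolding sv_def using bij arc sg by simp
qed

lemma sl_some_vert:
  assumes "\<forall>C\<in>set Gs. verts C \<noteq> {}"
  shows "map (\<lambda>k. SOME c. c \<in> verts (Gs ! k)) [0..<length Gs] \<in> verts (sprod_list Gs)"
proof (rule sl_vertsI)
  fix i assume i: "i < length Gs"
  hence "verts (Gs ! i) \<noteq> {}" using assms by simp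
  thus "map (\<lambda>k. SOME c. c \<in> verts (Gs ! k)) [0..<length Gs] ! i \<in> verts (Gs ! i)"
    using i by (simp add: some_in_eq)
qed simp

lemma sl_upd_vert:
  assumes "x \<in> verts (sprod_list Gs)" "p < length Gs" "a \<in> verts (Gs ! p)"
  shows "x[p := a] \<in> verts (sprod_list Gs)"
proof (rule sl_vertsI)
  show "length (x[p := a]) = length Gs" using sl_vertsD(1)[OF assms(1)] by simp
  fix i assume i: "i < length Gs"
  show "x[p := a] ! i \<in> verts (Gs ! i)"
    using assms sl_vertsD[OF assms(1)] i by (cases "i = p") auto
qed

lemma card2E:
  assumes "2 \<le> card A"
  obtains a b where "a \<in> A" "b \<in> A" "a \<noteq> b"
proof -
  have "\<exists>a b. a \<in> A \<and> b \<in> A \<and> a \<noteq> b"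
  proof (rule ccontr)
    assume "\<not> ?thesis"
    hence "\<forall>a\<in>A. \<forall>b\<in>A. a = b" by blast
    hence "card A \<le> 1" using card_le_Suc0_iff_eq[of A] by (cases "finite A") auto
    thus False using assms by simp
  qed
  thus ?thesis using that by blast
qed

lemma sl_card2:
  assumes w: "wfall Gs" and ne: "\<forall>C\<in>set Gs. verts C \<noteq> {}" and p: "p < length Gs"
    and c: "2 \<le> card (verts (Gs ! p))"
  shows "2 \<le> card (verts (sprod_list Gs))"
proof -
  obtain a b where ab: "a \<in> verts (Gs ! p)" "b \<in> verts (Gs ! p)" "a \<noteq> b" using card2E[OF c] by blast
  let ?x = "map (\<lambda>k. SOME c. c \<in> verts (Gs ! k)) [0..<length Gs]"
  have x: "?x \<in> verts (sprod_list Gs)" using sl_some_vert[OF ne] .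
  have v: "?x[p := a] \<in> verts (sprod_list Gs)" "?x[p := b] \<in> verts (sprod_list Gs)"
    using sl_upd_vert[OF x p] ab by auto
  have d: "?x[p := a] \<noteq> ?x[p := b]" using ab p by (metis length_map length_upt minus_nat.diff_0 nth_list_update_eq)
  have fin: "finite (verts (sprod_list Gs))" using wf_sl[OF w] unfolding wf_sgraph_def by blast
  have "card {?x[p := a], ?x[p := b]} \<le> card (verts (sprod_list Gs))"
    using v fin by (intro card_mono) auto
  thus ?thesis using d by simp
qed

definition rename :: "('a \<Rightarrow> 'b) \<Rightarrow> 'a sgraph \<Rightarrow> 'b sgraph" where
  "rename h G = \<lparr> verts = h ` verts G, arcs = map_prod h h ` arcs G,
     sgn = (\<lambda>x y. sgn G (inv_into (verts G) h x) (inv_into (verts G) h y)) \<rparr>"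

lemma rename_sv:
  assumes i: "inj_on h (verts G)" and w: "wf_sgraph G"
  shows "sv h {} G (rename h G)"
proof -
  have bij: "bij_betw h (verts G) (verts (rename h G))" using i by (simp add: rename_def bij_betw_def)
  have arc: "\<forall>u\<in>verts G. \<forall>v\<in>verts G. (u, v) \<in> arcs G \<longleftrightarrow> (h u, h v) \<in> arcs (rename h G)"
  proof (intro ballI iffI)
    fix u v assume "(u, v) \<in> arcs G"
    hence "map_prod h h (u, v) \<in> map_prod h h ` arcs G" by (rule imageI)
    thus "(h u, h v) \<in> arcs (rename h G)" by (simp add: rename_def)
  next
    fix u v assume uv: "u \<in> verts G" "v \<in> verts G" and "(h u, h v) \<in> arcs (rename h G)"
    then obtain u' v' where a: "(u', v') \<in> arcs G" "h u = h u'" "h v = h v'" by (auto simp: rename_def)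
    have "u' \<in> verts G" "v' \<in> verts G" using wf_arcsV[OF w a(1)] by auto
    hence "u = u'" "v = v'" using a uv i by (auto dest: inj_onD)
    thus "(u, v) \<in> arcs G" using a by simp
  qed
  have sg: "\<forall>u v. (u, v) \<in> arcs G \<longrightarrow> sgn (rename h G) (h u) (h v) = switch_sign {} u v * sgn G u v"
  proof (intro allI impI)
    fix u v assume "(u, v) \<in> arcs G"
    hence "u \<in> verts G" "v \<in> verts G" using wf_arcsV[OF w] by auto
    thus "sgn (rename h G) (h u) (h v) = switch_sign {} u v * sgn G u v"
      using i by (simp add: rename_def)
  qed
  show ?thesis unfolding sv_def using bij arc sg by simp
qed

lemma wf_sv_transfer:
  assumes w: "wf_sgraph G" and s: "sv h S G H" and c: "closed_sg H"
  shows "wf_sgraph H"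
proof -
  have b: "bij_betw h (verts G) (verts H)" and ar: "\<And>u v. u\<in>verts G \<Longrightarrow> v\<in>verts G \<Longrightarrow> (u, v) \<in> arcs G \<longleftrightarrow> (h u, h v) \<in> arcs H"
    and sg: "\<And>u v. (u, v) \<in> arcs G \<Longrightarrow> sgn H (h u) (h v) = switch_sign S u v * sgn G u v"
    using s unfolding sv_def by auto
  have fin: "finite (verts H)" using w b bij_betw_finite unfolding wf_sgraph_def by blast
  have surj: "\<And>x. x \<in> verts H \<Longrightarrow> \<exists>u\<in>verts G. x = h u" using b bij_betw_imp_surj_on by blast
  have cl: "arcs H \<subseteq> verts H \<times> verts H" using c unfolding closed_sg_def .
  have pre: "\<And>x y. (x, y) \<in> arcs H \<Longrightarrow> \<exists>u v. u \<in> verts G \<and> v \<in> verts G \<and> x = h u \<and> y = h v \<and> (u, v) \<in> arcs G"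
  proof -
    fix x y assume a: "(x, y) \<in> arcs H"
    hence "x \<in> verts H" "y \<in> verts H" using cl by auto
    then obtain u v where uv: "u \<in> verts G" "v \<in> verts G" "x = h u" "y = h v" using surj by metis
    thus "\<exists>u v. u \<in> verts G \<and> v \<in> verts G \<and> x = h u \<and> y = h v \<and> (u, v) \<in> arcs G"
      using ar a by blast
  qed
  have sym: "\<forall>x y. (x, y) \<in> arcs H \<longrightarrow> (y, x) \<in> arcs H"
  proof (intro allI impI)
    fix x y assume "(x, y) \<in> arcs H"
    then obtain u v where uv: "u \<in> verts G" "v \<in> verts G" "x = h u" "y = h v" "(u, v) \<in> arcs G" using pre by blast
    thus "(y, x) \<in> arcs H" using ar wf_symm[OF w uv(5)] by blast
  qed
  have irr: "\<forall>x. (x, x) \<notin> arcs H"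
  proof (intro allI notI)
    fix x assume "(x, x) \<in> arcs H"
    then obtain u v where uv: "u \<in> verts G" "v \<in> verts G" "x = h u" "x = h v" "(u, v) \<in> arcs G" using pre by blast
    have "u \<noteq> v" using wf_irrefl[OF w uv(5)] .
    thus False using b uv unfolding bij_betw_def by (metis inj_onD)
  qed
  have sgn: "\<forall>x y. (x, y) \<in> arcs H \<longrightarrow> sgn H x y \<in> {1, -1} \<and> sgn H x y = sgn H y x"
  proof (intro allI impI)
    fix x y assume "(x, y) \<in> arcs H"
    then obtain u v where uv: "u \<in> verts G" "v \<in> verts G" "x = h u" "y = h v" "(u, v) \<in> arcs G" using pre by blast
    have vu: "(v, u) \<in> arcs G" using wf_symm[OF w uv(5)] .
    have "sgn G u v \<in> {1, -1}" "sgn G u v = sgn G v u" using w uv(5) unfolding wf_sgraph_def by blast+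
    moreover have "switch_sign S u v = switch_sign S v u" "switch_sign S u v \<in> {1, -1}" unfolding switch_sign_def by auto
    ultimately show "sgn H x y \<in> {1, -1} \<and> sgn H x y = sgn H y x"
      using sg[OF uv(5)] sg[OF vu] uv by auto
  qed
  show ?thesis unfolding wf_sgraph_def using fin cl sym irr sgn by (intro conjI)
qed

lemma nat_copy:
  assumes w: "wf_sgraph G"
  shows "\<exists>(H :: nat sgraph) h. wf_sgraph H \<and> sv h {} G H \<and> card (verts H) = card (verts G)"
proof -
  have fin: "finite (verts G)" using w unfolding wf_sgraph_def by blast
  obtain h :: "_ \<Rightarrow> nat" where b: "bij_betw h (verts G) {0..<card (verts G)}"
    using ex_bij_betw_finite_nat[OF fin] by blast
  have i: "inj_on h (verts G)" using b bij_betw_def by blast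
  have s: "sv h {} G (rename h G)" using rename_sv[OF i w] .
  have c: "closed_sg (rename h G)"
    using w unfolding closed_sg_def rename_def wf_sgraph_def by auto
  have "card (verts (rename h G)) = card (verts G)" using i by (simp add: rename_def card_image)
  thus ?thesis using wf_sv_transfer[OF w s c] s by blast
qed


lemma two_nontriv_not_prime:
  assumes wA: "wf_sgraph A" and w: "wfall Cs" and ne: "\<forall>C\<in>set Cs. verts C \<noteq> {}"
    and j: "j < length Cs" "j' < length Cs" "j \<noteq> j'"
    and c: "2 \<le> card (verts (Cs ! j))" "2 \<le> card (verts (Cs ! j'))"
    and e: "sequiv A (sprod_list Cs)"
  shows "\<not> s_prime A"
proof -
  let ?n = "length Cs"
  let ?\<sigma> = "transpose 0 j"
  have s: "?\<sigma> permutes {..<?n}" using j by (intro permutes_swap_id) auto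
  define Cs' where "Cs' = permute_list ?\<sigma> Cs"
  have lc: "length Cs' = ?n" unfolding Cs'_def by simp
  have c0: "Cs' ! 0 = Cs ! j" unfolding Cs'_def using pl_nth[OF s refl, of 0] j by (cases Cs) auto
  have cons: "Cs' = Cs ! j # tl Cs'"
  proof -
    have "Cs' \<noteq> []" using lc j by auto
    thus ?thesis using c0 by (metis hd_conv_nth list.collapse)
  qed
  have setc: "set Cs' = set Cs" unfolding Cs'_def using mset_permute_list[OF s] by (metis set_mset_mset)
  have w': "wfall (tl Cs')" using w setc by (metis list.set_sel(2) tl_Nil)
  have ne': "\<forall>C\<in>set (tl Cs'). verts C \<noteq> {}" using ne setc by (metis list.set_sel(2) tl_Nil)
  have wj: "wf_sgraph (Cs ! j)" using w j by simp
  have s1: "sequiv (sprod_list Cs) (sprod_list Cs')"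
    using perm_iso[OF s w] sequiv_sv unfolding Cs'_def by blast
  have s2: "sequiv (sprod_list Cs') (sprod (Cs ! j) (sprod_list (tl Cs')))"
    using split_iso[OF wj w'] sequiv_sv cons by metis
  have wR: "wf_sgraph (sprod_list (tl Cs'))" using wf_sl[OF w'] .
  obtain H :: "nat sgraph" and f where H: "wf_sgraph H" "sv f {} (Cs ! j) H" "card (verts H) = card (verts (Cs ! j))"
    using nat_copy[OF wj] by blast
  obtain K :: "nat sgraph" and g where K: "wf_sgraph K" "sv g {} (sprod_list (tl Cs')) K"
    "card (verts K) = card (verts (sprod_list (tl Cs')))"
    using nat_copy[OF wR] by blast
  have s3: "sequiv (sprod (Cs ! j) (sprod_list (tl Cs'))) (sprod H K)"
    using sprod_cong[OF wj wR H(2) K(2)] sequiv_sv by blast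
  have "sequiv A (sprod H K)"
  proof -
    have "sequiv (sprod_list Cs') (sprod H K)"
      using sequiv_trans[OF closed_sl s2 s3] .
    hence "sequiv (sprod_list Cs) (sprod H K)" using sequiv_trans[OF closed_sl s1] by blast
    thus ?thesis using sequiv_trans[OF wf_closed[OF wA] e] by blast
  qed
  moreover have "2 \<le> card (verts H)" using H(3) c(1) by simp
  moreover have "2 \<le> card (verts K)"
  proof -
    let ?p = "?\<sigma> j' - 1"
    have sj: "?\<sigma> j' \<noteq> 0" using j unfolding transpose_def by auto
    have sj2: "?\<sigma> j' < ?n" using perm_lt[OF s j(2)] .
    have p: "?p < length (tl Cs')" using sj sj2 lc by simp
    have sp: "Suc ?p = ?\<sigma> j'" using sj by simp
    have "tl Cs' ! ?p = Cs' ! Suc ?p" using p by (simp add: nth_tl)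
    also have "\<dots> = Cs' ! ?\<sigma> j'" using sp by simp
    finally have "tl Cs' ! ?p = Cs' ! ?\<sigma> j'" .
    also have "\<dots> = Cs ! (?\<sigma> (?\<sigma> j'))" unfolding Cs'_def using pl_nth[OF s refl sj2] .
    also have "\<dots> = Cs ! j'" unfolding transpose_def by auto
    finally have "tl Cs' ! ?p = Cs ! j'" .
    hence "2 \<le> card (verts (sprod_list (tl Cs')))" using sl_card2[OF w' ne' p] c(2) by simp
    thus ?thesis using K(3) by simp
  qed
  ultimately show ?thesis unfolding s_prime_def using H(1) K(1) by blast
qed


lemma sl_eqI: "length x = length Gs \<Longrightarrow> length y = length Gs \<Longrightarrow> (\<And>k. k < length Gs \<Longrightarrow> x ! k = y ! k) \<Longrightarrow> x = y"
  by (rule nth_equalityI) auto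

lemma proj_rtrancl:
  assumes w: "wfall Gs" and r: "(x, y) \<in> (arcs (sprod_list Gs))\<^sup>*" and i: "i < length Gs"
  shows "(x ! i, y ! i) \<in> (arcs (Gs ! i))\<^sup>*"
  using r
proof (induction rule: rtrancl_induct)
  case base show ?case by simp
next
  case (step y z)
  from step(2) obtain p where p: "p < length Gs" "(y ! p, z ! p) \<in> arcs (Gs ! p)"
    "\<And>j. j < length Gs \<Longrightarrow> j \<noteq> p \<Longrightarrow> y ! j = z ! j" by (rule sl_arcsE) (rule that)
  show ?case
  proof (cases "p = i")
    case True thus ?thesis using step(3) p(2) by (meson rtrancl.rtrancl_into_rtrancl)
  next
    case False thus ?thesis using step(3) p(3)[OF i] by simp
  qed
qed

definition coordrel :: "'v sgraph list \<Rightarrow> nat \<Rightarrow> 'v list \<Rightarrow> ('v list \<times> 'v list) set" where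
  "coordrel Gs i x = {(y, z). (y, z) \<in> arcs (sprod_list Gs) \<and> (\<forall>k<length Gs. k \<noteq> i \<longrightarrow> y ! k = x ! k \<and> z ! k = x ! k)}"

lemma lift_rtrancl:
  assumes w: "wfall Gs" and r: "(a, b) \<in> (arcs (Gs ! i))\<^sup>*" and i: "i < length Gs"
    and x: "x \<in> verts (sprod_list Gs)" and a: "a \<in> verts (Gs ! i)"
  shows "(x[i := a], x[i := b]) \<in> (coordrel Gs i x)\<^sup>*"
  using r
proof (induction rule: rtrancl_induct)
  case base show ?case by simp
next
  case (step c d)
  have wi: "wf_sgraph (Gs ! i)" using w i by simp
  have cd: "c \<in> verts (Gs ! i)" "d \<in> verts (Gs ! i)" using wf_arcsV[OF wi step(2)] by auto
  have lx: "length x = length Gs" using sl_vertsD(1)[OF x] .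
  have "(x[i := c], x[i := d]) \<in> arcs (sprod_list Gs)"
    by (rule sl_arcsI[OF sl_upd_vert[OF x i cd(1)] sl_upd_vert[OF x i cd(2)] i])
       (use step(2) lx i in auto)
  hence "(x[i := c], x[i := d]) \<in> coordrel Gs i x" unfolding coordrel_def by auto
  from step(3) this show ?case by (rule rtrancl.rtrancl_into_rtrancl)
qed

lemma factor_connected:
  assumes w: "wfall Gs" and c: "\<forall>x\<in>verts (sprod_list Gs). \<forall>y\<in>verts (sprod_list Gs). (x, y) \<in> (arcs (sprod_list Gs))\<^sup>*"
    and x: "x \<in> verts (sprod_list Gs)" and i: "i < length Gs"
    and ab: "a \<in> verts (Gs ! i)" "b \<in> verts (Gs ! i)"
  shows "(a, b) \<in> (arcs (Gs ! i))\<^sup>*"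
proof -
  have "(x[i := a], x[i := b]) \<in> (arcs (sprod_list Gs))\<^sup>*"
    using c sl_upd_vert[OF x i ab(1)] sl_upd_vert[OF x i ab(2)] by blast
  from proj_rtrancl[OF w this i] show ?thesis using sl_vertsD(1)[OF x] i by simp
qed

lemma layer_self: "v \<in> verts (sprod_list Gs) \<Longrightarrow> v \<in> layer Gs i v"
  unfolding layer_def by simp

lemma layer_sub: "layer Gs i v \<subseteq> verts (sprod_list Gs)"
  unfolding layer_def by blast

lemma layer_eq: "y \<in> layer Gs i v \<Longrightarrow> layer Gs i y = layer Gs i v"
  unfolding layer_def by auto

lemma layer_form:
  assumes "y \<in> layer Gs i v" "v \<in> verts (sprod_list Gs)" "i < length Gs"
  shows "y = v[i := y ! i]"
proof -
  have l: "length y = length Gs" "length v = length Gs" using assms sl_vertsD(1) layer_sub by blast+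
  show ?thesis
    by (rule sl_eqI[of _ Gs]) (use assms l in \<open>auto simp: layer_def nth_list_update\<close>)
qed

lemma layer_connected:
  assumes w: "wfall Gs" and cf: "\<And>a b. a \<in> verts (Gs ! i) \<Longrightarrow> b \<in> verts (Gs ! i) \<Longrightarrow> (a, b) \<in> (arcs (Gs ! i))\<^sup>*"
    and i: "i < length Gs" and v: "v \<in> verts (sprod_list Gs)"
    and yz: "y \<in> layer Gs i v" "z \<in> layer Gs i v"
  shows "(y, z) \<in> (arcs (sprod_list Gs) \<inter> layer Gs i v \<times> layer Gs i v)\<^sup>*"
proof -
  have yv: "y \<in> verts (sprod_list Gs)" "z \<in> verts (sprod_list Gs)" using yz layer_sub by blast+
  have ya: "y ! i \<in> verts (Gs ! i)" "z ! i \<in> verts (Gs ! i)" using yv sl_vertsD(2) i by blast+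
  have "(v[i := y ! i], v[i := z ! i]) \<in> (coordrel Gs i v)\<^sup>*"
    using lift_rtrancl[OF w cf[OF ya] i v ya(1)] .
  moreover have "coordrel Gs i v \<subseteq> arcs (sprod_list Gs) \<inter> layer Gs i v \<times> layer Gs i v"
    unfolding coordrel_def layer_def using closed_sl[of Gs] unfolding closed_sg_def by auto
  ultimately have "(v[i := y ! i], v[i := z ! i]) \<in> (arcs (sprod_list Gs) \<inter> layer Gs i v \<times> layer Gs i v)\<^sup>*"
    using rtrancl_mono by blast
  thus ?thesis using layer_form[OF yz(1) v i] layer_form[OF yz(2) v i] by simp
qed

lemma layer_outside:
  assumes w: "wfall Gs" and v: "v \<in> verts (sprod_list Gs)" and i: "i < length Gs"
    and wv: "x \<in> verts (sprod_list Gs)" "x \<notin> layer Gs i v"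
    and yz: "y \<in> layer Gs i v" "z \<in> layer Gs i v"
    and a: "(x, y) \<in> arcs (sprod_list Gs)" "(x, z) \<in> arcs (sprod_list Gs)"
  shows "y = z"
proof -
  obtain k where k: "k < length Gs" "k \<noteq> i" "x ! k \<noteq> v ! k" using wv unfolding layer_def by blast
  have ly: "y ! m = v ! m" if "m < length Gs" "m \<noteq> i" for m using yz(1) that unfolding layer_def by blast
  have lz: "z ! m = v ! m" if "m < length Gs" "m \<noteq> i" for m using yz(2) that unfolding layer_def by blast
  from a(1) obtain p where p: "p < length Gs" "\<And>j. j < length Gs \<Longrightarrow> j \<noteq> p \<Longrightarrow> x ! j = y ! j"
    by (rule sl_arcsE) (rule that)
  from a(2) obtain q where q: "q < length Gs" "\<And>j. j < length Gs \<Longrightarrow> j \<noteq> q \<Longrightarrow> x ! j = z ! j"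
    by (rule sl_arcsE) (rule that)
  have "p = k" using p(2)[OF k(1)] ly[OF k(1,2)] k(3) by metis
  moreover have "q = k" using q(2)[OF k(1)] lz[OF k(1,2)] k(3) by metis
  ultimately have "\<And>m. m < length Gs \<Longrightarrow> y ! m = z ! m"
    using p(2) q(2) ly lz k by metis
  thus ?thesis using sl_vertsD(1) layer_sub yz by (metis subsetD sl_eqI)
qed

lemma common_nb:
  assumes w: "wfall Gs" and l: "length u = length Gs" "length y = length Gs" "length z = length Gs" "length x = length Gs"
    and ab: "a < length Gs" "b < length Gs" "a \<noteq> b"
    and y: "\<And>k. k < length Gs \<Longrightarrow> k \<noteq> a \<Longrightarrow> y ! k = u ! k" "y ! a \<noteq> u ! a"
    and z: "\<And>k. k < length Gs \<Longrightarrow> k \<noteq> b \<Longrightarrow> z ! k = u ! k" "z ! b \<noteq> u ! b"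
    and a1: "(y, x) \<in> arcs (sprod_list Gs)" and a2: "(z, x) \<in> arcs (sprod_list Gs)" and xu: "x \<noteq> u"
  shows "\<And>k. k < length Gs \<Longrightarrow> k \<noteq> a \<Longrightarrow> x ! k = z ! k"
proof -
  from a1 obtain p where p: "p < length Gs" "\<And>j. j < length Gs \<Longrightarrow> j \<noteq> p \<Longrightarrow> y ! j = x ! j"
    by (rule sl_arcsE) (rule that)
  from a2 obtain q where q: "q < length Gs" "\<And>j. j < length Gs \<Longrightarrow> j \<noteq> q \<Longrightarrow> z ! j = x ! j"
    by (rule sl_arcsE) (rule that)
  have pa: "p \<noteq> a"
  proof
    assume pa: "p = a"
    have xa: "\<And>k. k < length Gs \<Longrightarrow> k \<noteq> a \<Longrightarrow> x ! k = u ! k" using p(2) y(1) pa by metis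
    have "x ! b \<noteq> z ! b" using xa[OF ab(2)] ab(3) z(2) by metis
    hence qb: "q = b" using q(2)[OF ab(2)] by metis
    have "x ! a = u ! a" using q(2)[OF ab(1)] z(1)[OF ab(1)] qb ab(3) by metis
    hence "x = u" using xa l by (metis sl_eqI)
    thus False using xu by simp
  qed
  have "x ! a \<noteq> z ! a" using p(2)[OF ab(1)] pa y(2) z(1)[OF ab(1)] ab(3) by metis
  hence qa: "q = a" using q(2)[OF ab(1)] by metis
  show "\<And>k. k < length Gs \<Longrightarrow> k \<noteq> a \<Longrightarrow> x ! k = z ! k" using q(2) qa by metis
qed

definition nrel :: "'v sgraph list \<Rightarrow> nat \<Rightarrow> ('v list \<times> 'v list) set" where
  "nrel Gs i = {(y, z). (y, z) \<in> arcs (sprod_list Gs) \<and> y ! i = z ! i}"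

lemma colayer_reach:
  assumes w: "wfall Gs" and cf: "\<And>k a b. k < length Gs \<Longrightarrow> a \<in> verts (Gs ! k) \<Longrightarrow> b \<in> verts (Gs ! k) \<Longrightarrow> (a, b) \<in> (arcs (Gs ! k))\<^sup>*"
    and i: "i < length Gs" and v: "v \<in> verts (sprod_list Gs)"
  shows "colayer Gs i v = {x. (v, x) \<in> (nrel Gs i)\<^sup>*}"
proof
  show "{x. (v, x) \<in> (nrel Gs i)\<^sup>*} \<subseteq> colayer Gs i v"
  proof
    fix x assume "x \<in> {x. (v, x) \<in> (nrel Gs i)\<^sup>*}"
    hence "(v, x) \<in> (nrel Gs i)\<^sup>*" by simp
    thus "x \<in> colayer Gs i v"
    proof (induction rule: rtrancl_induct)
      case base thus ?case using v unfolding colayer_def by simp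
    next
      case (step y z)
      thus ?case unfolding colayer_def nrel_def using closed_sl[of Gs] unfolding closed_sg_def by auto
    qed
  qed
next
  show "colayer Gs i v \<subseteq> {x. (v, x) \<in> (nrel Gs i)\<^sup>*}"
  proof
    fix x assume x: "x \<in> colayer Gs i v"
    hence xv: "x \<in> verts (sprod_list Gs)" and xi: "x ! i = v ! i" unfolding colayer_def by auto
    have lx: "length x = length Gs" and lv: "length v = length Gs" using xv v sl_vertsD(1) by auto
    define wm where "wm m = map (\<lambda>k. if k < m then x ! k else v ! k) [0..<length Gs]" for m
    have wmv: "wm m \<in> verts (sprod_list Gs)" for m
      by (rule sl_vertsI) (use xv v sl_vertsD(2) in \<open>auto simp: wm_def\<close>)
    have "m \<le> length Gs \<Longrightarrow> (v, wm m) \<in> (nrel Gs i)\<^sup>*" for m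
    proof (induction m)
      case 0
      have "wm 0 = v" by (rule sl_eqI[of _ Gs]) (use lv in \<open>auto simp: wm_def\<close>)
      thus ?case by simp
    next
      case (Suc m)
      hence m: "m < length Gs" by simp
      have IH: "(v, wm m) \<in> (nrel Gs i)\<^sup>*" using Suc by simp
      have wS: "wm (Suc m) = (wm m)[m := x ! m]"
        by (rule sl_eqI[of _ Gs]) (use m in \<open>auto simp: wm_def nth_list_update\<close>)
      have wmm: "wm m ! m = v ! m" using m by (simp add: wm_def)
      show ?case
      proof (cases "m = i")
        case True
        have "wm (Suc m) = wm m" using wS True xi wmm by (metis list_update_id)
        thus ?thesis using IH by simp
      next
        case False
        have ab: "v ! m \<in> verts (Gs ! m)" "x ! m \<in> verts (Gs ! m)" using v xv sl_vertsD(2) m by blast+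
        have "((wm m)[m := v ! m], (wm m)[m := x ! m]) \<in> (coordrel Gs m (wm m))\<^sup>*"
          using lift_rtrancl[OF w cf[OF m ab] m wmv ab(1)] .
        moreover have "(wm m)[m := v ! m] = wm m" using wmm by (metis list_update_id)
        moreover have "coordrel Gs m (wm m) \<subseteq> nrel Gs i"
        proof
          fix p assume "p \<in> coordrel Gs m (wm m)"
          then obtain y z where p: "p = (y, z)" "(y, z) \<in> arcs (sprod_list Gs)"
            "\<forall>k<length Gs. k \<noteq> m \<longrightarrow> y ! k = wm m ! k \<and> z ! k = wm m ! k"
            unfolding coordrel_def by blast
          have "y ! i = z ! i" using p(3) False i by metis
          thus "p \<in> nrel Gs i" unfolding nrel_def using p by blast
        qed
        ultimately have "(wm m, wm (Suc m)) \<in> (nrel Gs i)\<^sup>*"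
          using wS rtrancl_mono[of "coordrel Gs m (wm m)" "nrel Gs i"] by (metis subsetD)
        thus ?thesis using IH by simp
      qed
    qed
    moreover have "wm (length Gs) = x" by (rule sl_eqI[of _ Gs]) (use lx in \<open>auto simp: wm_def\<close>)
    ultimately show "x \<in> {x. (v, x) \<in> (nrel Gs i)\<^sup>*}" by force
  qed
qed


definition ck :: "'v sgraph list \<Rightarrow> 'v list set \<Rightarrow> nat \<Rightarrow> ('v list \<times> 'v list) set" where
  "ck Gs S k = {(p, q). (p, q) \<in> arcs (sprod_list Gs) \<and> p \<in> S \<and> q \<in> S \<and> (\<forall>m<length Gs. m \<noteq> k \<longrightarrow> p ! m = q ! m)}"

lemma arc_at:
  assumes w: "wfall Gs" and a: "(p, q) \<in> arcs (sprod_list Gs)" and k: "k < length Gs"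
    and ag: "\<And>m. m < length Gs \<Longrightarrow> m \<noteq> k \<Longrightarrow> p ! m = q ! m"
  shows "(p ! k, q ! k) \<in> arcs (Gs ! k)"
proof -
  from a obtain r where r: "r < length Gs" "(p ! r, q ! r) \<in> arcs (Gs ! r)" by (rule sl_arcsE) (rule that)
  have "r = k"
  proof (rule ccontr)
    assume "r \<noteq> k"
    hence "p ! r = q ! r" using ag r(1) by blast
    thus False using sl_arc_unique[OF w r] by simp
  qed
  thus ?thesis using r by simp
qed

lemma ck_in_S: "(a, b) \<in> (ck Gs S k)\<^sup>* \<Longrightarrow> a \<in> S \<Longrightarrow> b \<in> S"
  by (induction rule: rtrancl_induct) (auto simp: ck_def)

lemma transport:
  assumes w: "wfall Gs" and SV: "S \<subseteq> verts (sprod_list Gs)"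
    and sq: "\<And>x y z. x \<in> verts (sprod_list Gs) \<Longrightarrow> y \<in> S \<Longrightarrow> z \<in> S \<Longrightarrow> y \<noteq> z \<Longrightarrow>
             (y, x) \<in> arcs (sprod_list Gs) \<Longrightarrow> (z, x) \<in> arcs (sprod_list Gs) \<Longrightarrow> x \<in> S"
    and x: "x \<in> S" and x1: "x1 \<in> S" and a: "(x, x1) \<in> arcs (sprod_list Gs)" and l: "l < length Gs"
    and ag: "\<And>m. m < length Gs \<Longrightarrow> m \<noteq> l \<Longrightarrow> x ! m = x1 ! m"
    and k: "k < length Gs" "k \<noteq> l"
    and r: "(x1, q) \<in> (ck Gs S k)\<^sup>*"
  shows "(x, x[k := q ! k]) \<in> (ck Gs S k)\<^sup>* \<and> x[k := q ! k] \<in> S \<and> (x[k := q ! k], q) \<in> arcs (sprod_list Gs)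
         \<and> (\<forall>m<length Gs. m \<noteq> l \<longrightarrow> x[k := q ! k] ! m = q ! m)"
  using r
proof (induction rule: rtrancl_induct)
  case base
  have "x[k := x1 ! k] = x" using ag[OF k] by (metis list_update_id)
  thus ?case using x a ag by simp
next
  case (step q q')
  let ?n = "length Gs" and ?Q = "sprod_list Gs"
  let ?x' = "x[k := q ! k]" and ?x'' = "x[k := q' ! k]"
  have IH: "(x, ?x') \<in> (ck Gs S k)\<^sup>*" "?x' \<in> S" "(?x', q) \<in> arcs ?Q"
    "\<And>m. m < ?n \<Longrightarrow> m \<noteq> l \<Longrightarrow> ?x' ! m = q ! m" using step(3) by auto
  have qq: "(q, q') \<in> arcs ?Q" "q \<in> S" "q' \<in> S" "\<And>m. m < ?n \<Longrightarrow> m \<noteq> k \<Longrightarrow> q ! m = q' ! m"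
    using step(2) unfolding ck_def by auto
  have xV: "x \<in> verts ?Q" using x SV by blast
  have lx: "length x = ?n" using sl_vertsD(1)[OF xV] .
  have q'V: "q' \<in> verts ?Q" using qq SV by blast
  have akk: "(q ! k, q' ! k) \<in> arcs (Gs ! k)" using arc_at[OF w qq(1) k(1) qq(4)] .
  have all: "(?x' ! l, q ! l) \<in> arcs (Gs ! l)" using arc_at[OF w IH(3) l IH(4)] .
  have x''V: "?x'' \<in> verts ?Q" using sl_upd_vert[OF xV k(1)] sl_vertsD(2)[OF q'V k(1)] by blast
  have x'V: "?x' \<in> verts ?Q" using IH(2) SV by blast
  have a1: "(?x', ?x'') \<in> arcs ?Q"
    by (rule sl_arcsI[OF x'V x''V k(1)]) (use akk lx k in auto)
  have ag2: "\<And>m. m < ?n \<Longrightarrow> m \<noteq> l \<Longrightarrow> ?x'' ! m = q' ! m"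
  proof -
    fix m assume m: "m < ?n" "m \<noteq> l"
    show "?x'' ! m = q' ! m"
    proof (cases "m = k")
      case True thus ?thesis using lx k by simp
    next
      case False
      have "?x'' ! m = ?x' ! m" using False by simp
      also have "\<dots> = q ! m" using IH(4) m by blast
      also have "\<dots> = q' ! m" using qq(4) m False by blast
      finally show ?thesis .
    qed
  qed
  have xl: "?x'' ! l = ?x' ! l" using k by simp
  have ql: "q' ! l = q ! l" using qq(4)[OF l] k(2) by simp
  have a2: "(?x'', q') \<in> arcs ?Q"
    by (rule sl_arcsI[OF x''V q'V l]) (use all xl ql ag2 in auto)
  have a2': "(q', ?x'') \<in> arcs ?Q" using wf_symm[OF wf_sl[OF w] a2] .
  have ne: "?x' \<noteq> q'"
  proof
    assume "?x' = q'"
    hence "?x' ! l = q ! l" using ql by simp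
    thus False using sl_arc_unique[OF w l all] by simp
  qed
  have x''S: "?x'' \<in> S" using sq[OF x''V IH(2) qq(3) ne a1 a2'] .
  have "(?x', ?x'') \<in> ck Gs S k" unfolding ck_def using a1 IH(2) x''S by auto
  hence "(x, ?x'') \<in> (ck Gs S k)\<^sup>*" using IH(1) by (meson rtrancl.rtrancl_into_rtrancl)
  thus ?case using x''S a2 ag2 by blast
qed

lemma box_claim:
  assumes w: "wfall Gs" and SV: "S \<subseteq> verts (sprod_list Gs)"
    and conn: "\<And>x y. x \<in> S \<Longrightarrow> y \<in> S \<Longrightarrow> (x, y) \<in> (arcs (sprod_list Gs) \<inter> S \<times> S)\<^sup>*"
    and sq: "\<And>x y z. x \<in> verts (sprod_list Gs) \<Longrightarrow> y \<in> S \<Longrightarrow> z \<in> S \<Longrightarrow> y \<noteq> z \<Longrightarrow>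
             (y, x) \<in> arcs (sprod_list Gs) \<Longrightarrow> (z, x) \<in> arcs (sprod_list Gs) \<Longrightarrow> x \<in> S"
    and x: "x \<in> S" and y: "y \<in> S" and k: "k < length Gs"
  shows "x[k := y ! k] \<in> S"
proof -
  have "(x, y) \<in> (arcs (sprod_list Gs) \<inter> S \<times> S)\<^sup>*" using conn x y by blast
  hence "\<forall>k<length Gs. (x, x[k := y ! k]) \<in> (ck Gs S k)\<^sup>*"
  proof (induction rule: converse_rtrancl_induct)
    case base
    show ?case by simp
  next
    case (step x x1)
    have a: "(x, x1) \<in> arcs (sprod_list Gs)" "x \<in> S" "x1 \<in> S" using step(1) by auto
    from a(1) obtain l where l: "l < length Gs" "\<And>j. j < length Gs \<Longrightarrow> j \<noteq> l \<Longrightarrow> x ! j = x1 ! j"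
      by (rule sl_arcsE) (rule that)
    have lx: "length x = length Gs" "length x1 = length Gs" using a SV sl_vertsD(1) by blast+
    show ?case
    proof (intro allI impI)
      fix k assume k: "k < length Gs"
      show "(x, x[k := y ! k]) \<in> (ck Gs S k)\<^sup>*"
      proof (cases "k = l")
        case True
        have e: "x1[k := y ! k] = x[k := y ! k]"
          by (rule sl_eqI[of _ Gs]) (use lx l True in \<open>auto simp: nth_list_update\<close>)
        have "(x, x1) \<in> ck Gs S k" unfolding ck_def using a l True by auto
        moreover have "(x1, x1[k := y ! k]) \<in> (ck Gs S k)\<^sup>*" using step(3) k by blast
        ultimately show ?thesis using e by (metis converse_rtrancl_into_rtrancl)
      next
        case False
        have r: "(x1, x1[k := y ! k]) \<in> (ck Gs S k)\<^sup>*" using step(3) k by blast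
        have "x1[k := y ! k] ! k = y ! k" using lx k by simp
        thus ?thesis using transport[OF w SV sq a(2) a(3) a(1) l k False r] by simp
      qed
    qed
  qed
  thus ?thesis using ck_in_S x k by blast
qed

lemma box_lemma:
  assumes w: "wfall Gs" and SV: "S \<subseteq> verts (sprod_list Gs)"
    and conn: "\<And>x y. x \<in> S \<Longrightarrow> y \<in> S \<Longrightarrow> (x, y) \<in> (arcs (sprod_list Gs) \<inter> S \<times> S)\<^sup>*"
    and sq: "\<And>x y z. x \<in> verts (sprod_list Gs) \<Longrightarrow> y \<in> S \<Longrightarrow> z \<in> S \<Longrightarrow> y \<noteq> z \<Longrightarrow>
             (y, x) \<in> arcs (sprod_list Gs) \<Longrightarrow> (z, x) \<in> arcs (sprod_list Gs) \<Longrightarrow> x \<in> S"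
    and x0: "x0 \<in> S" and z: "z \<in> verts (sprod_list Gs)" and zk: "\<And>k. k < length Gs \<Longrightarrow> \<exists>y\<in>S. z ! k = y ! k"
  shows "z \<in> S"
proof -
  have lz: "length z = length Gs" and lx: "length x0 = length Gs" using z x0 SV sl_vertsD(1) by blast+
  define wm where "wm m = map (\<lambda>k. if k < m then z ! k else x0 ! k) [0..<length Gs]" for m
  have "m \<le> length Gs \<Longrightarrow> wm m \<in> S" for m
  proof (induction m)
    case 0
    have "wm 0 = x0" by (rule sl_eqI[of _ Gs]) (use lx in \<open>auto simp: wm_def\<close>)
    thus ?case using x0 by simp
  next
    case (Suc m)
    hence m: "m < length Gs" by simp
    obtain y where y: "y \<in> S" "z ! m = y ! m" using zk[OF m] by blast
    have wS: "wm (Suc m) = (wm m)[m := y ! m]"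
      by (rule sl_eqI[of _ Gs]) (use m y in \<open>auto simp: wm_def nth_list_update\<close>)
    have "wm m \<in> S" using Suc by simp
    thus ?case using box_claim[OF w SV conn sq _ y(1) m] wS by simp
  qed
  moreover have "wm (length Gs) = z" by (rule sl_eqI[of _ Gs]) (use lz in \<open>auto simp: wm_def\<close>)
  ultimately show ?thesis by force
qed


lemma svD:
  assumes "sv f S G H"
  shows "bij_betw f (verts G) (verts H)" "S \<subseteq> verts G"
    "\<And>u v. u \<in> verts G \<Longrightarrow> v \<in> verts G \<Longrightarrow> (u, v) \<in> arcs G \<longleftrightarrow> (f u, f v) \<in> arcs H"
    "\<And>u v. (u, v) \<in> arcs G \<Longrightarrow> sgn H (f u) (f v) = switch_sign S u v * sgn G u v"
  using assms unfolding sv_def by blast+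

lemma rtrancl_map_gen:
  assumes "(a, b) \<in> R\<^sup>*" and "\<And>p q. (p, q) \<in> R \<Longrightarrow> (f p, f q) \<in> R'"
  shows "(f a, f b) \<in> R'\<^sup>*"
  using assms(1)
proof (induction rule: rtrancl_induct)
  case base show ?case by simp
next
  case (step y z)
  from step(3) assms(2)[OF step(2)] show ?case by (rule rtrancl.rtrancl_into_rtrancl)
qed

lemma card_le1_eq: "finite A \<Longrightarrow> card A \<le> 1 \<Longrightarrow> a \<in> A \<Longrightarrow> b \<in> A \<Longrightarrow> a = b"
  using card_le_Suc0_iff_eq[of A] by simp

lemma half:
  assumes wA: "wfall As" and wB: "wfall Bs"
    and s: "sv h S0 (sprod_list As) (sprod_list Bs)"
    and i: "i < length As" and pr: "s_prime (As ! i)"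
    and cf: "\<And>a b. a \<in> verts (As ! i) \<Longrightarrow> b \<in> verts (As ! i) \<Longrightarrow> (a, b) \<in> (arcs (As ! i))\<^sup>*"
    and c2: "2 \<le> card (verts (As ! i))"
    and v: "v \<in> verts (sprod_list As)"
  shows "\<exists>j < length Bs. h ` layer As i v \<subseteq> layer Bs j (h v)"
proof -
  let ?P = "sprod_list As" and ?Q = "sprod_list Bs" and ?L = "layer As i v"
  let ?m = "length Bs"
  define S where "S = h ` ?L"
  have hb: "bij_betw h (verts ?P) (verts ?Q)" using svD(1)[OF s] .
  have ar: "\<And>u w. u \<in> verts ?P \<Longrightarrow> w \<in> verts ?P \<Longrightarrow> (u, w) \<in> arcs ?P \<longleftrightarrow> (h u, h w) \<in> arcs ?Q"
    using svD(3)[OF s] .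
  have hinj: "inj_on h (verts ?P)" using bij_betw_imp_inj_on[OF hb] .
  have himg: "h ` verts ?P = verts ?Q" using bij_betw_imp_surj_on[OF hb] .
  have LV: "?L \<subseteq> verts ?P" using layer_sub .
  have SV: "S \<subseteq> verts ?Q" unfolding S_def using LV himg by blast
  have hvS: "h v \<in> S" unfolding S_def using layer_self[OF v] by blast
  have hvV: "h v \<in> verts ?Q" using hvS SV by blast
  have conn: "\<And>x y. x \<in> S \<Longrightarrow> y \<in> S \<Longrightarrow> (x, y) \<in> (arcs ?Q \<inter> S \<times> S)\<^sup>*"
  proof -
    fix x y assume "x \<in> S" "y \<in> S"
    then obtain x' y' where xy: "x' \<in> ?L" "y' \<in> ?L" "x = h x'" "y = h y'" unfolding S_def by blast
    have "(x', y') \<in> (arcs ?P \<inter> ?L \<times> ?L)\<^sup>*" using layer_connected[OF wA cf i v xy(1,2)] .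
    moreover have "\<And>p q. (p, q) \<in> arcs ?P \<inter> ?L \<times> ?L \<Longrightarrow> (h p, h q) \<in> arcs ?Q \<inter> S \<times> S"
      using ar LV unfolding S_def by blast
    ultimately show "(x, y) \<in> (arcs ?Q \<inter> S \<times> S)\<^sup>*" using xy rtrancl_map_gen by metis
  qed
  have sq: "\<And>x y z. x \<in> verts ?Q \<Longrightarrow> y \<in> S \<Longrightarrow> z \<in> S \<Longrightarrow> y \<noteq> z \<Longrightarrow>
             (y, x) \<in> arcs ?Q \<Longrightarrow> (z, x) \<in> arcs ?Q \<Longrightarrow> x \<in> S"
  proof -
    fix x y z assume x: "x \<in> verts ?Q" and y: "y \<in> S" and z: "z \<in> S" and yz: "y \<noteq> z"
      and a: "(y, x) \<in> arcs ?Q" "(z, x) \<in> arcs ?Q"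
    obtain x' where x': "x' \<in> verts ?P" "x = h x'" using x himg by blast
    obtain y' z' where yz': "y' \<in> ?L" "z' \<in> ?L" "y = h y'" "z = h z'" using y z unfolding S_def by blast
    have yzV: "y' \<in> verts ?P" "z' \<in> verts ?P" using yz' LV by blast+
    have a': "(y', x') \<in> arcs ?P" "(z', x') \<in> arcs ?P" using ar yzV x' a yz' by blast+
    have a'': "(x', y') \<in> arcs ?P" "(x', z') \<in> arcs ?P" using wf_symm[OF wf_sl[OF wA]] a' by blast+
    have "x' \<in> ?L"
    proof (rule ccontr)
      assume "x' \<notin> ?L"
      hence "y' = z'" using layer_outside[OF wA v i x'(1) _ yz'(1,2) a''] by blast
      thus False using yz yz' by simp
    qed
    thus "x \<in> S" unfolding S_def using x' by blast
  qed
  define U where "U k = (\<lambda>y. y ! k) ` S" for k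
  have UV: "\<And>k. k < ?m \<Longrightarrow> U k \<subseteq> verts (Bs ! k)" unfolding U_def using SV sl_vertsD(2) by blast
  have Ufin: "\<And>k. k < ?m \<Longrightarrow> finite (U k)"
    using UV wB unfolding wf_sgraph_def by (meson finite_subset nth_mem)
  let ?B = "{z \<in> verts ?Q. \<forall>k<?m. z ! k \<in> U k}"
  have SB: "S = ?B"
  proof
    show "S \<subseteq> ?B" using SV unfolding U_def by blast
    show "?B \<subseteq> S"
    proof
      fix z assume z: "z \<in> ?B"
      show "z \<in> S"
      proof (rule box_lemma[OF wB SV conn sq hvS])
        show "z \<in> verts ?Q" using z by blast
        fix k assume "k < ?m"
        thus "\<exists>y\<in>S. z ! k = y ! k" using z unfolding U_def by blast
      qed
    qed
  qed
  let ?Cs = "map (\<lambda>k. induce (Bs ! k) (U k)) [0..<?m]"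
  have wAi: "wf_sgraph (As ! i)" using wA i by simp
  have "sequiv (induce ?P ?L) (As ! i)" unfolding sequiv_sv by (intro exI, rule layer_iso[OF wA i v])
  hence e1: "sequiv (As ! i) (induce ?P ?L)" by (rule sequiv_sym[OF wf_closed[OF wAi]])
  have e2: "sequiv (induce ?P ?L) (induce ?Q S)"
    unfolding sequiv_sv S_def by (intro exI, rule sv_induce[OF s LV])
  have "sequiv (induce ?Q ?B) (sprod_list ?Cs)"
    unfolding sequiv_sv by (intro exI, rule box_iso[OF wB UV])
  hence e3: "sequiv (induce ?Q S) (sprod_list ?Cs)" using SB by simp
  have eq: "sequiv (As ! i) (sprod_list ?Cs)"
    using sequiv_trans[OF wf_closed[OF wAi] e1 sequiv_trans[OF closed_induce e2 e3]] .
  have wC: "wfall ?Cs"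
  proof
    fix C assume "C \<in> set ?Cs"
    then obtain k where k: "k < ?m" "C = induce (Bs ! k) (U k)" by auto
    have "wf_sgraph (Bs ! k)" using wB k(1) by simp
    thus "wf_sgraph C" using wf_induce UV[OF k(1)] k(2) by blast
  qed
  have neC: "\<forall>C\<in>set ?Cs. verts C \<noteq> {}" unfolding U_def using hvS by auto
  have atmost: "\<And>j k. j < ?m \<Longrightarrow> k < ?m \<Longrightarrow> j \<noteq> k \<Longrightarrow> 2 \<le> card (U j) \<Longrightarrow> card (U k) \<le> 1"
  proof (rule ccontr)
    fix j k assume jk: "j < ?m" "k < ?m" "j \<noteq> k" "2 \<le> card (U j)" "\<not> card (U k) \<le> 1"
    have "\<not> s_prime (As ! i)"
      by (rule two_nontriv_not_prime[OF wAi wC neC, of j k]) (use jk eq in auto)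
    thus False using pr by simp
  qed
  obtain a b where ab: "a \<in> verts (As ! i)" "b \<in> verts (As ! i)" "a \<noteq> b" using card2E[OF c2] by blast
  obtain c where c: "c \<in> verts (As ! i)" "c \<noteq> v ! i" using ab by metis
  have lv: "length v = length As" using sl_vertsD(1)[OF v] .
  have vc: "v[i := c] \<in> ?L" unfolding layer_def using sl_upd_vert[OF v i c(1)] lv by auto
  have vcne: "v[i := c] \<noteq> v" using c(2) i lv by (metis nth_list_update_eq)
  have "\<exists>j<?m. 2 \<le> card (U j)"
  proof (rule ccontr)
    assume "\<not> ?thesis"
    hence le: "\<And>k. k < ?m \<Longrightarrow> card (U k) \<le> 1" by force
    have "h (v[i := c]) = h v"
    proof (rule sl_eqI[of _ Bs])
      have "h (v[i := c]) \<in> S" unfolding S_def using vc by blast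
      thus "length (h (v[i := c])) = ?m" "length (h v) = ?m" using SV hvS sl_vertsD(1) by blast+
      fix k assume k: "k < ?m"
      show "h (v[i := c]) ! k = h v ! k"
        by (rule card_le1_eq[OF Ufin[OF k] le[OF k]]) (use vc hvS in \<open>auto simp: U_def S_def\<close>)
    qed
    moreover have "v[i := c] \<in> verts ?P" using vc LV by blast
    ultimately show False using vcne hinj v by (meson inj_onD)
  qed
  then obtain j where j: "j < ?m" "2 \<le> card (U j)" by blast
  have "S \<subseteq> layer Bs j (h v)"
  proof
    fix y assume y: "y \<in> S"
    have "\<forall>k<?m. k \<noteq> j \<longrightarrow> y ! k = h v ! k"
    proof (intro allI impI)
      fix k assume k: "k < ?m" "k \<noteq> j"
      have le: "card (U k) \<le> 1" using atmost[OF j(1) k(1) _ j(2)] k(2) by metis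
      show "y ! k = h v ! k" using card_le1_eq[OF Ufin[OF k(1)] le] y hvS unfolding U_def by blast
    qed
    thus "y \<in> layer Bs j (h v)" unfolding layer_def using y SV by blast
  qed
  thus ?thesis using j unfolding S_def by blast
qed


lemma rel_mset_refl_on: "(\<And>x. x \<in># M \<Longrightarrow> R x x) \<Longrightarrow> rel_mset R M M"
proof (induction M)
  case empty show ?case by (rule rel_mset_Zero)
next
  case (add x M)
  show ?case by (rule rel_mset_Plus) (use add in auto)
qed

lemma sv_refl: "sv id {} G G"
  unfolding sv_def by simp

lemma sequiv_of_sv: "sv f S G H \<Longrightarrow> sequiv G H"
  unfolding sequiv_sv by blast

lemma colayer0_iso:
  assumes w: "wfall Gs" and ne: "Gs \<noteq> []" and v: "v \<in> verts (sprod_list Gs)"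
  shows "sequiv (induce (sprod_list Gs) (colayer Gs 0 v)) (sprod_list (tl Gs))"
proof -
  obtain A As where G: "Gs = A # As" using ne by (cases Gs) auto
  have wA: "wf_sgraph A" and wAs: "wfall As" using w G by auto
  let ?P = "sprod_list (A # As)" and ?R = "sprod_list As" and ?sp = "\<lambda>x. (hd x, tl x)"
  let ?C = "colayer (A # As) 0 v"
  have s: "sv ?sp {} ?P (sprod A ?R)" using split_iso[OF wA wAs] .
  have CV: "?C \<subseteq> verts ?P" unfolding colayer_def by blast
  have vv: "v \<in> verts ?P" using v G by simp
  have vf: "v = hd v # tl v" using sl_cons_form[OF vv] .
  have hv: "hd v \<in> verts A" using vv vf sl_cons_verts by metis
  have img: "?sp ` ?C = {hd v} \<times> verts ?R"
  proof
    show "?sp ` ?C \<subseteq> {hd v} \<times> verts ?R"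
    proof
      fix p assume "p \<in> ?sp ` ?C"
      then obtain x where x: "x \<in> ?C" "p = ?sp x" by blast
      have xv: "x \<in> verts ?P" and x0: "x ! 0 = v ! 0" using x unfolding colayer_def by auto
      have xf: "x = hd x # tl x" using sl_cons_form[OF xv] .
      have "tl x \<in> verts ?R" using xv xf sl_cons_verts by metis
      moreover have "hd x = hd v" using x0 xf vf by (metis nth_Cons_0)
      ultimately show "p \<in> {hd v} \<times> verts ?R" using x by simp
    qed
    show "{hd v} \<times> verts ?R \<subseteq> ?sp ` ?C"
    proof
      fix p assume "p \<in> {hd v} \<times> verts ?R"
      then obtain r where r: "p = (hd v, r)" "r \<in> verts ?R" by blast
      have "hd v # r \<in> verts ?P" using hv r(2) sl_cons_verts by metis
      moreover have "(hd v # r) ! 0 = v ! 0" using vf by (metis nth_Cons_0)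
      ultimately have "hd v # r \<in> ?C" unfolding colayer_def by simp
      hence "?sp (hd v # r) \<in> ?sp ` ?C" by (rule imageI)
      thus "p \<in> ?sp ` ?C" using r(1) by simp
    qed
  qed
  have e1: "sequiv (induce ?P ?C) (induce (sprod A ?R) ({hd v} \<times> verts ?R))"
    using sequiv_of_sv[OF sv_induce[OF s CV]] img by simp
  have e2: "sequiv (induce (sprod A ?R) ({hd v} \<times> verts ?R)) ?R"
    using sequiv_of_sv[OF klayer_iso[OF wA hv]] .
  show ?thesis using sequiv_trans[OF closed_induce e1 e2] G by simp
qed

lemma colayer_perm:
  assumes s: "\<sigma> permutes {..<length Gs}" and w: "wfall Gs" and n: "0 < length Gs"
    and v: "v \<in> verts (sprod_list Gs)"
  shows "sequiv (induce (sprod_list Gs) (colayer Gs (\<sigma> 0) v))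
                 (induce (sprod_list (permute_list \<sigma> Gs)) (colayer (permute_list \<sigma> Gs) 0 (permute_list \<sigma> v)))"
proof -
  let ?Q = "sprod_list Gs" and ?Q' = "sprod_list (permute_list \<sigma> Gs)" and ?\<pi> = "permute_list \<sigma>"
  have p: "sv ?\<pi> {} ?Q ?Q'" using perm_iso[OF s w] .
  have hb: "bij_betw ?\<pi> (verts ?Q) (verts ?Q')" using svD(1)[OF p] .
  have CV: "colayer Gs (\<sigma> 0) v \<subseteq> verts ?Q" unfolding colayer_def by blast
  have p0: "\<And>y. y \<in> verts ?Q \<Longrightarrow> ?\<pi> y ! 0 = y ! \<sigma> 0"
    using pl_nth[OF s _ n] sl_vertsD(1) by blast
  have img: "?\<pi> ` colayer Gs (\<sigma> 0) v = colayer (permute_list \<sigma> Gs) 0 (?\<pi> v)"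
  proof
    show "?\<pi> ` colayer Gs (\<sigma> 0) v \<subseteq> colayer (permute_list \<sigma> Gs) 0 (?\<pi> v)"
    proof
      fix y' assume "y' \<in> ?\<pi> ` colayer Gs (\<sigma> 0) v"
      then obtain y where y: "y \<in> colayer Gs (\<sigma> 0) v" "y' = ?\<pi> y" by blast
      have yv: "y \<in> verts ?Q" "y ! \<sigma> 0 = v ! \<sigma> 0" using y unfolding colayer_def by auto
      have "y' \<in> verts ?Q'" using hb yv y bij_betwE by blast
      moreover have "y' ! 0 = ?\<pi> v ! 0" using p0[OF yv(1)] p0[OF v] yv y by simp
      ultimately show "y' \<in> colayer (permute_list \<sigma> Gs) 0 (?\<pi> v)" unfolding colayer_def by simp
    qed
    show "colayer (permute_list \<sigma> Gs) 0 (?\<pi> v) \<subseteq> ?\<pi> ` colayer Gs (\<sigma> 0) v"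
    proof
      fix y' assume y': "y' \<in> colayer (permute_list \<sigma> Gs) 0 (?\<pi> v)"
      hence yv': "y' \<in> verts ?Q'" "y' ! 0 = ?\<pi> v ! 0" unfolding colayer_def by auto
      obtain y where y: "y \<in> verts ?Q" "y' = ?\<pi> y" using yv'(1) bij_betw_imp_surj_on[OF hb] by blast
      have "y ! \<sigma> 0 = v ! \<sigma> 0" using p0[OF y(1)] p0[OF v] yv'(2) y(2) by simp
      hence "y \<in> colayer Gs (\<sigma> 0) v" unfolding colayer_def using y by simp
      thus "y' \<in> ?\<pi> ` colayer Gs (\<sigma> 0) v" using y by blast
    qed
  qed
  show ?thesis using sequiv_of_sv[OF sv_induce[OF p CV]] img by simp
qed

lemma nrel_layer:
  assumes w: "wfall Gs" and a: "(p, q) \<in> arcs (sprod_list Gs)" and i: "i < length Gs"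
  shows "p ! i = q ! i \<longleftrightarrow> q \<notin> layer Gs i p"
proof -
  from a obtain r where r: "r < length Gs" "(p ! r, q ! r) \<in> arcs (Gs ! r)"
    "\<And>j. j < length Gs \<Longrightarrow> j \<noteq> r \<Longrightarrow> p ! j = q ! j" and qv: "q \<in> verts (sprod_list Gs)"
    by (rule sl_arcsE) (rule that)
  have ne: "p ! r \<noteq> q ! r" using sl_arc_unique[OF w r(1,2)] .
  show ?thesis
  proof (cases "r = i")
    case True
    have "q \<in> layer Gs i p" unfolding layer_def using qv r(3) True by force
    thus ?thesis using ne True by simp
  next
    case False
    have "q \<notin> layer Gs i p" unfolding layer_def using ne r(1) False by force
    thus ?thesis using r(3)[OF i] False by simp
  qed
qed

lemma card2_of_arc:
  assumes w: "wf_sgraph A" and a: "arcs A \<noteq> {}"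
  shows "2 \<le> card (verts A)"
proof -
  obtain x y where xy: "(x, y) \<in> arcs A" using a by auto
  have ne: "x \<noteq> y" using wf_irrefl[OF w xy] .
  have v: "x \<in> verts A" "y \<in> verts A" using wf_arcsV[OF w xy] by auto
  have fin: "finite (verts A)" using w unfolding wf_sgraph_def by blast
  have "card {x, y} \<le> card (verts A)" using v fin by (intro card_mono) auto
  thus ?thesis using ne by simp
qed

lemma arc_from_reach:
  assumes "(a, b) \<in> R\<^sup>*" "a \<noteq> b"
  shows "\<exists>c. (a, c) \<in> R"
  using assms by (induction rule: converse_rtrancl_induct) auto


lemma key_layers:
  assumes wA: "wfall As" and wB: "wfall Bs"
    and s: "sv h S0 (sprod_list As) (sprod_list Bs)"
    and pA: "\<And>k. k < length As \<Longrightarrow> s_prime (As ! k)" and pB: "\<And>k. k < length Bs \<Longrightarrow> s_prime (Bs ! k)"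
    and cfA: "\<And>k a b. k < length As \<Longrightarrow> a \<in> verts (As ! k) \<Longrightarrow> b \<in> verts (As ! k) \<Longrightarrow> (a, b) \<in> (arcs (As ! k))\<^sup>*"
    and cfB: "\<And>k a b. k < length Bs \<Longrightarrow> a \<in> verts (Bs ! k) \<Longrightarrow> b \<in> verts (Bs ! k) \<Longrightarrow> (a, b) \<in> (arcs (Bs ! k))\<^sup>*"
    and cA: "\<And>k. k < length As \<Longrightarrow> 2 \<le> card (verts (As ! k))"
    and cB: "\<And>k. k < length Bs \<Longrightarrow> 2 \<le> card (verts (Bs ! k))"
    and n: "0 < length As" and v: "v \<in> verts (sprod_list As)"
  shows "\<exists>j<length Bs. h ` layer As 0 v = layer Bs j (h v)"
proof -
  let ?P = "sprod_list As" and ?Q = "sprod_list Bs"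
  obtain j where j: "j < length Bs" "h ` layer As 0 v \<subseteq> layer Bs j (h v)"
    using half[OF wA wB s n pA[OF n] cfA[OF n] cA[OF n] v] by blast
  let ?g = "inv_into (verts ?P) h"
  have sg: "sv ?g (h ` S0) ?Q ?P" using sv_sym[OF closed_sl s] .
  have hb: "bij_betw h (verts ?P) (verts ?Q)" using svD(1)[OF s] .
  have hinj: "inj_on h (verts ?P)" using bij_betw_imp_inj_on[OF hb] .
  have himg: "h ` verts ?P = verts ?Q" using bij_betw_imp_surj_on[OF hb] .
  have hv: "h v \<in> verts ?Q" using v himg by (metis imageI)
  have gh: "?g (h v) = v" using inv_into_f_f[OF hinj v] .
  obtain i' where i': "i' < length As" "?g ` layer Bs j (h v) \<subseteq> layer As i' (?g (h v))"
    using half[OF wB wA sg j(1) pB[OF j(1)] cfB[OF j(1)] cB[OF j(1)] hv] by blast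
  have sub: "layer As 0 v \<subseteq> layer As i' v"
  proof
    fix x assume x: "x \<in> layer As 0 v"
    have xv: "x \<in> verts ?P" using subsetD[OF layer_sub x] .
    have "h x \<in> layer Bs j (h v)" by (rule subsetD[OF j(2) imageI[OF x]])
    hence "?g (h x) \<in> layer As i' (?g (h v))" by (rule subsetD[OF i'(2) imageI])
    hence "?g (h x) \<in> layer As i' v" using gh by simp
    thus "x \<in> layer As i' v" using inv_into_f_f[OF hinj xv] by simp
  qed
  have i0: "i' = 0"
  proof (rule ccontr)
    assume i0: "i' \<noteq> 0"
    obtain a b where ab: "a \<in> verts (As ! 0)" "b \<in> verts (As ! 0)" "a \<noteq> b" using card2E[OF cA[OF n]] by blast
    obtain c where c: "c \<in> verts (As ! 0)" "c \<noteq> v ! 0" using ab by metis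
    have lv: "length v = length As" using sl_vertsD(1)[OF v] .
    have "v[0 := c] \<in> layer As 0 v" unfolding layer_def using sl_upd_vert[OF v n c(1)] lv by auto
    hence "v[0 := c] \<in> layer As i' v" by (rule subsetD[OF sub])
    hence "v[0 := c] ! 0 = v ! 0" unfolding layer_def using n i0 by simp
    thus False using c(2) n lv by simp
  qed
  have "layer Bs j (h v) \<subseteq> h ` layer As 0 v"
  proof
    fix y assume y: "y \<in> layer Bs j (h v)"
    have yv: "y \<in> verts ?Q" using subsetD[OF layer_sub y] .
    have "?g y \<in> layer As i' (?g (h v))" by (rule subsetD[OF i'(2) imageI[OF y]])
    hence "?g y \<in> layer As 0 v" using gh i0 by simp
    moreover have "h (?g y) = y" using f_inv_into_f[of y h "verts ?P"] yv himg by simp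
    ultimately show "y \<in> h ` layer As 0 v" by (metis imageI)
  qed
  thus ?thesis using j by blast
qed

lemma const_layers:
  assumes wA: "wfall As" and wB: "wfall Bs"
    and s: "sv h S0 (sprod_list As) (sprod_list Bs)"
    and pA: "\<And>k. k < length As \<Longrightarrow> s_prime (As ! k)" and pB: "\<And>k. k < length Bs \<Longrightarrow> s_prime (Bs ! k)"
    and cfA: "\<And>k a b. k < length As \<Longrightarrow> a \<in> verts (As ! k) \<Longrightarrow> b \<in> verts (As ! k) \<Longrightarrow> (a, b) \<in> (arcs (As ! k))\<^sup>*"
    and cfB: "\<And>k a b. k < length Bs \<Longrightarrow> a \<in> verts (Bs ! k) \<Longrightarrow> b \<in> verts (Bs ! k) \<Longrightarrow> (a, b) \<in> (arcs (Bs ! k))\<^sup>*"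
    and cA: "\<And>k. k < length As \<Longrightarrow> 2 \<le> card (verts (As ! k))"
    and cB: "\<And>k. k < length Bs \<Longrightarrow> 2 \<le> card (verts (Bs ! k))"
    and n: "0 < length As" and v0: "v0 \<in> verts (sprod_list As)"
    and conn: "\<And>x y. x \<in> verts (sprod_list As) \<Longrightarrow> y \<in> verts (sprod_list As) \<Longrightarrow> (x, y) \<in> (arcs (sprod_list As))\<^sup>*"
  shows "\<exists>j<length Bs. \<forall>v\<in>verts (sprod_list As). h ` layer As 0 v = layer Bs j (h v)"
proof -
  let ?P = "sprod_list As" and ?Q = "sprod_list Bs"
  have key: "\<And>v. v \<in> verts ?P \<Longrightarrow> \<exists>j<length Bs. h ` layer As 0 v = layer Bs j (h v)"
  proof -
    fix v assume v: "v \<in> verts ?P"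
    show "\<exists>j<length Bs. h ` layer As 0 v = layer Bs j (h v)"
    proof (rule key_layers[OF wA wB s])
      show "\<And>k. k < length As \<Longrightarrow> s_prime (As ! k)" using pA .
      show "\<And>k. k < length Bs \<Longrightarrow> s_prime (Bs ! k)" using pB .
      show "\<And>k a b. k < length As \<Longrightarrow> a \<in> verts (As ! k) \<Longrightarrow> b \<in> verts (As ! k) \<Longrightarrow> (a, b) \<in> (arcs (As ! k))\<^sup>*" using cfA .
      show "\<And>k a b. k < length Bs \<Longrightarrow> a \<in> verts (Bs ! k) \<Longrightarrow> b \<in> verts (Bs ! k) \<Longrightarrow> (a, b) \<in> (arcs (Bs ! k))\<^sup>*" using cfB .
      show "\<And>k. k < length As \<Longrightarrow> 2 \<le> card (verts (As ! k))" using cA .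
      show "\<And>k. k < length Bs \<Longrightarrow> 2 \<le> card (verts (Bs ! k))" using cB .
    qed (use n v in auto)
  qed
  obtain j0 where j0: "j0 < length Bs" "h ` layer As 0 v0 = layer Bs j0 (h v0)" using key[OF v0] by blast
  have hb: "bij_betw h (verts ?P) (verts ?Q)" using svD(1)[OF s] .
  have hinj: "inj_on h (verts ?P)" using bij_betw_imp_inj_on[OF hb] .
  have himg: "h ` verts ?P = verts ?Q" using bij_betw_imp_surj_on[OF hb] .
  have ar: "\<And>u w. u \<in> verts ?P \<Longrightarrow> w \<in> verts ?P \<Longrightarrow> (u, w) \<in> arcs ?P \<longleftrightarrow> (h u, h w) \<in> arcs ?Q"
    using svD(3)[OF s] .
  have hV: "\<And>x. x \<in> verts ?P \<Longrightarrow> h x \<in> verts ?Q" using himg by (metis imageI)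
  have lenP: "\<And>x. x \<in> verts ?P \<Longrightarrow> length x = length As" using sl_vertsD(1) .
  have lenQ: "\<And>x. x \<in> verts ?Q \<Longrightarrow> length x = length Bs" using sl_vertsD(1) .
  have cl: "\<And>x y. (x, y) \<in> arcs ?P \<Longrightarrow> x \<in> verts ?P \<and> y \<in> verts ?P"
    using closed_sl[of As] unfolding closed_sg_def by blast
  have stp: "h ` layer As 0 w = layer Bs j0 (h w)"
    if v: "v \<in> verts ?P" and a: "(v, w) \<in> arcs ?P" and IH: "h ` layer As 0 v = layer Bs j0 (h v)" for v w
  proof -
    have w: "w \<in> verts ?P" using cl[OF a] by blast
    obtain j' where j': "j' < length Bs" "h ` layer As 0 w = layer Bs j' (h w)" using key[OF w] by blast
    show ?thesis
    proof (cases "w \<in> layer As 0 v")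
      case True
      have e: "layer As 0 w = layer As 0 v" using layer_eq[OF True] .
      have "h w \<in> h ` layer As 0 w" using imageI[OF layer_self[OF w]] .
      hence "h w \<in> layer Bs j0 (h v)" using e IH by simp
      hence "layer Bs j0 (h w) = layer Bs j0 (h v)" by (rule layer_eq)
      thus ?thesis using e IH by simp
    next
      case False
      have lv: "length v = length As" and lw: "length w = length As" using lenP v w by auto
      have v0w0: "v ! 0 = w ! 0" using nrel_layer[OF wA a n] False by simp
      from a obtain k where k: "k < length As" "(v ! k, w ! k) \<in> arcs (As ! k)"
        "\<And>m. m < length As \<Longrightarrow> m \<noteq> k \<Longrightarrow> v ! m = w ! m" by (rule sl_arcsE) (rule that)
      have kne: "v ! k \<noteq> w ! k" using sl_arc_unique[OF wA k(1,2)] .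
      have k0: "k \<noteq> 0" using kne v0w0 by metis
      have wA0: "wf_sgraph (As ! 0)" using wA n by simp
      obtain a b where ab: "a \<in> verts (As ! 0)" "b \<in> verts (As ! 0)" "a \<noteq> b" using card2E[OF cA[OF n]] by blast
      obtain b' where b': "b' \<in> verts (As ! 0)" "b' \<noteq> v ! 0" using ab by metis
      have v0V: "v ! 0 \<in> verts (As ! 0)" using sl_vertsD(2)[OF v n] .
      obtain c where c: "(v ! 0, c) \<in> arcs (As ! 0)" using arc_from_reach[OF cfA[OF n v0V b'(1)]] b'(2) by metis
      have cV: "c \<in> verts (As ! 0)" using wf_arcsV[OF wA0 c] by blast
      have cne: "c \<noteq> v ! 0" using wf_irrefl[OF wA0 c] by metis
      let ?x = "v[0 := c]" and ?x' = "w[0 := c]"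
      have xV: "?x \<in> verts ?P" using sl_upd_vert[OF v n cV] .
      have x'V: "?x' \<in> verts ?P" using sl_upd_vert[OF w n cV] .
      have xL: "?x \<in> layer As 0 v" unfolding layer_def using xV lv by simp
      have x'L: "?x' \<in> layer As 0 w" unfolding layer_def using x'V lw by simp
      have a1: "(v, ?x) \<in> arcs ?P"
        by (rule sl_arcsI[OF v xV n]) (use c lv n in auto)
      have a2: "(?x, ?x') \<in> arcs ?P"
      proof (rule sl_arcsI[OF xV x'V k(1)])
        show "(?x ! k, ?x' ! k) \<in> arcs (As ! k)" using k(2) k0 by simp
        fix m assume m: "m < length As" "m \<noteq> k"
        show "?x ! m = ?x' ! m" using k(3)[OF m] lv lw n by (cases "m = 0") auto
      qed
      have a3: "(w, ?x') \<in> arcs ?P"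
        by (rule sl_arcsI[OF w x'V n]) (use c lw n v0w0 in auto)
      have x'v: "?x' \<noteq> v" using kne k0 by (metis nth_list_update_neq)
      have x'w: "?x' \<noteq> w" using cne v0w0 lw n by (metis nth_list_update_eq)
      have xv: "?x \<noteq> v" using cne lv n by (metis nth_list_update_eq)
      let ?u = "h v" and ?y = "h ?x" and ?z = "h w" and ?xh = "h ?x'"
      have uV: "?u \<in> verts ?Q" using hV[OF v] .
      have yV: "?y \<in> verts ?Q" using hV[OF xV] .
      have zV: "?z \<in> verts ?Q" using hV[OF w] .
      have xhV: "?xh \<in> verts ?Q" using hV[OF x'V] .
      have b1: "(?y, ?xh) \<in> arcs ?Q" using ar[OF xV x'V] a2 by simp
      have b2: "(?z, ?xh) \<in> arcs ?Q" using ar[OF w x'V] a3 by simp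
      have b3: "(?u, ?z) \<in> arcs ?Q" using ar[OF v w] a by simp
      have "?y \<in> h ` layer As 0 v" by (rule imageI[OF xL])
      hence yL: "?y \<in> layer Bs j0 ?u" using IH by simp
      have yu: "?y \<noteq> ?u" using xv hinj xV v by (meson inj_onD)
      have zL: "?z \<notin> layer Bs j0 ?u"
      proof
        assume "?z \<in> layer Bs j0 ?u"
        hence "?z \<in> h ` layer As 0 v" using IH by simp
        then obtain w' where w': "w' \<in> layer As 0 v" "h w = h w'" by blast
        have "w' \<in> verts ?P" using subsetD[OF layer_sub w'(1)] .
        hence "w = w'" using w'(2) hinj w by (meson inj_onD)
        thus False using False w'(1) by simp
      qed
      have yag: "\<And>m. m < length Bs \<Longrightarrow> m \<noteq> j0 \<Longrightarrow> ?y ! m = ?u ! m" using yL unfolding layer_def by blast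
      have yj0: "?y ! j0 \<noteq> ?u ! j0"
      proof
        assume "?y ! j0 = ?u ! j0"
        hence "?y = ?u" using yag lenQ[OF yV] lenQ[OF uV] by (metis sl_eqI)
        thus False using yu by simp
      qed
      from b3 obtain bb where bb: "bb < length Bs" "(?u ! bb, ?z ! bb) \<in> arcs (Bs ! bb)"
        "\<And>m. m < length Bs \<Longrightarrow> m \<noteq> bb \<Longrightarrow> ?u ! m = ?z ! m" by (rule sl_arcsE) (rule that)
      have zbb: "?z ! bb \<noteq> ?u ! bb" using sl_arc_unique[OF wB bb(1,2)] by (rule not_sym)
      have bbj: "bb \<noteq> j0"
      proof
        assume "bb = j0"
        hence "\<forall>m<length Bs. m \<noteq> j0 \<longrightarrow> ?z ! m = ?u ! m" using bb(3) by simp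
        hence "?z \<in> layer Bs j0 ?u" unfolding layer_def using zV by simp
        thus False using zL by simp
      qed
      have xhu: "?xh \<noteq> ?u" using x'v hinj x'V v by (meson inj_onD)
      have nb: "\<And>m. m < length Bs \<Longrightarrow> m \<noteq> j0 \<Longrightarrow> ?xh ! m = ?z ! m"
      proof (rule common_nb[OF wB lenQ[OF uV] lenQ[OF yV] lenQ[OF zV] lenQ[OF xhV] j0(1) bb(1) bbj[symmetric]])
        show "\<And>m. m < length Bs \<Longrightarrow> m \<noteq> j0 \<Longrightarrow> ?y ! m = ?u ! m" using yag .
        show "?y ! j0 \<noteq> ?u ! j0" using yj0 .
        show "\<And>m. m < length Bs \<Longrightarrow> m \<noteq> bb \<Longrightarrow> ?z ! m = ?u ! m" using bb(3) by simp
        show "?z ! bb \<noteq> ?u ! bb" using zbb .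
        show "(?y, ?xh) \<in> arcs ?Q" using b1 .
        show "(?z, ?xh) \<in> arcs ?Q" using b2 .
        show "?xh \<noteq> ?u" using xhu .
      qed
      have "?xh \<in> h ` layer As 0 w" by (rule imageI[OF x'L])
      hence xhL: "?xh \<in> layer Bs j' ?z" using j'(2) by simp
      have xhz: "?xh \<noteq> ?z" using x'w hinj x'V w by (meson inj_onD)
      have "j' = j0"
      proof (rule ccontr)
        assume jj: "j' \<noteq> j0"
        have "\<And>m. m < length Bs \<Longrightarrow> ?xh ! m = ?z ! m"
        proof -
          fix m assume m: "m < length Bs"
          show "?xh ! m = ?z ! m"
          proof (cases "m = j0")
            case True
            hence "m \<noteq> j'" using jj by simp
            thus ?thesis using xhL m unfolding layer_def by blast
          next
            case False thus ?thesis using nb m by blast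
          qed
        qed
        hence "?xh = ?z" using lenQ[OF xhV] lenQ[OF zV] by (metis sl_eqI)
        thus False using xhz by simp
      qed
      thus ?thesis using j'(2) by simp
    qed
  qed
  have "\<forall>v. (v0, v) \<in> (arcs ?P)\<^sup>* \<longrightarrow> h ` layer As 0 v = layer Bs j0 (h v)"
  proof (intro allI impI)
    fix v assume "(v0, v) \<in> (arcs ?P)\<^sup>*"
    thus "h ` layer As 0 v = layer Bs j0 (h v)"
    proof (induction rule: rtrancl_induct)
      case base show ?case using j0(2) .
    next
      case (step y z)
      have "y \<in> verts ?P" using cl[OF step(2)] by blast
      thus ?case using stp[OF _ step(2) step(3)] by blast
    qed
  qed
  thus ?thesis using j0(1) conn[OF v0] by blast
qed


lemma decompE:
  assumes "prime_s_decomposition D G"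
  obtains Hs where "mset Hs = D" "sequiv G (sprod_list Hs)" "wfall Hs"
    "\<And>k. k < length Hs \<Longrightarrow> s_prime (Hs ! k)" "\<And>k. k < length Hs \<Longrightarrow> arcs (Hs ! k) \<noteq> {}"
    "\<And>H. H \<in> set Hs \<Longrightarrow> wf_sgraph H \<and> arcs H \<noteq> {}"
proof -
  from assms obtain Hs where H: "mset Hs = D" "sequiv G (sprod_list Hs)"
    and D: "\<forall>H\<in>#D. wf_sgraph H \<and> arcs H \<noteq> {}" "\<forall>H\<in>#D. s_prime H"
    unfolding prime_s_decomposition_def s_decomposition_def by blast
  have mem: "\<And>H. H \<in> set Hs \<Longrightarrow> H \<in># D" using H(1) by auto
  have a: "\<And>H. H \<in> set Hs \<Longrightarrow> wf_sgraph H \<and> arcs H \<noteq> {}" using mem D(1) by blast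
  have b: "\<And>k. k < length Hs \<Longrightarrow> s_prime (Hs ! k)" using mem D(2) nth_mem by blast
  show ?thesis using that[OF H(1,2)] a b nth_mem by blast
qed

lemma connected_transfer:
  assumes w: "wf_sgraph G" and c: "sconnected G" and s: "sv f T G P"
  shows "\<And>x y. x \<in> verts P \<Longrightarrow> y \<in> verts P \<Longrightarrow> (x, y) \<in> (arcs P)\<^sup>*"
proof -
  fix x y assume x: "x \<in> verts P" and y: "y \<in> verts P"
  have hb: "bij_betw f (verts G) (verts P)" using svD(1)[OF s] .
  obtain u where u: "u \<in> verts G" "x = f u" using x bij_betw_imp_surj_on[OF hb] by blast
  obtain w where w': "w \<in> verts G" "y = f w" using y bij_betw_imp_surj_on[OF hb] by blast
  have "(u, w) \<in> (arcs G)\<^sup>*" using c u(1) w'(1) unfolding sconnected_def by blast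
  moreover have "\<And>p q. (p, q) \<in> arcs G \<Longrightarrow> (f p, f q) \<in> arcs P"
  proof -
    fix p q assume a: "(p, q) \<in> arcs G"
    have "p \<in> verts G" "q \<in> verts G" using wf_arcsV[OF w a] by auto
    thus "(f p, f q) \<in> arcs P" using svD(3)[OF s] a by blast
  qed
  ultimately have "(f u, f w) \<in> (arcs P)\<^sup>*" by (rule rtrancl_map_gen)
  thus "(x, y) \<in> (arcs P)\<^sup>*" using u w' by simp
qed

theorem lemma4p10:
  fixes G :: "'a sgraph" and D1 D2 :: "'b sgraph multiset"
  assumes "wf_sgraph G" and "sconnected G" and "arcs G \<noteq> {}"
    and "prime_s_decomposition D1 G" and "prime_s_decomposition D2 G"
  shows "\<exists>(X :: 'b sgraph) (Y :: nat sgraph) D1' D2'.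
           wf_sgraph X \<and> wf_sgraph Y \<and> sequiv G (sprod X Y)
         \<and> mset_sequiv D1 (add_mset X D1') \<and> mset_sequiv D2 (add_mset X D2')
         \<and> s_decomposition D1' Y \<and> s_decomposition D2' Y"
proof -
  note wG = assms(1) and cG = assms(2)
  obtain As where As: "mset As = D1" "sequiv G (sprod_list As)" "wfall As"
    "\<And>k. k < length As \<Longrightarrow> s_prime (As ! k)" "\<And>k. k < length As \<Longrightarrow> arcs (As ! k) \<noteq> {}"
    "\<And>H. H \<in> set As \<Longrightarrow> wf_sgraph H \<and> arcs H \<noteq> {}"
    using decompE[OF assms(4)] by blast
  obtain Bs where Bs: "mset Bs = D2" "sequiv G (sprod_list Bs)" "wfall Bs"
    "\<And>k. k < length Bs \<Longrightarrow> s_prime (Bs ! k)" "\<And>k. k < length Bs \<Longrightarrow> arcs (Bs ! k) \<noteq> {}"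
    "\<And>H. H \<in> set Bs \<Longrightarrow> wf_sgraph H \<and> arcs H \<noteq> {}"
    using decompE[OF assms(5)] by blast
  let ?P = "sprod_list As" and ?Q = "sprod_list Bs"
  have wA: "wfall As" using As(3) .
  have wB: "wfall Bs" using Bs(3) .
  obtain f1 T1 where f1: "sv f1 T1 G ?P" using As(2) sequiv_sv by blast
  obtain f2 T2 where f2: "sv f2 T2 G ?Q" using Bs(2) sequiv_sv by blast
  have "sequiv ?P G" using sequiv_sym[OF closed_sl As(2)] .
  hence "sequiv ?P ?Q" using sequiv_trans[OF closed_sl _ Bs(2)] by blast
  then obtain h S0 where s: "sv h S0 ?P ?Q" using sequiv_sv by blast
  have hb: "bij_betw h (verts ?P) (verts ?Q)" using svD(1)[OF s] .
  have hinj: "inj_on h (verts ?P)" using bij_betw_imp_inj_on[OF hb] .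
  have himg: "h ` verts ?P = verts ?Q" using bij_betw_imp_surj_on[OF hb] .
  have hV: "\<And>x. x \<in> verts ?P \<Longrightarrow> h x \<in> verts ?Q" using himg by (metis imageI)
  have ar: "\<And>u w. u \<in> verts ?P \<Longrightarrow> w \<in> verts ?P \<Longrightarrow> (u, w) \<in> arcs ?P \<longleftrightarrow> (h u, h w) \<in> arcs ?Q"
    using svD(3)[OF s] .
  have connP: "\<And>x y. x \<in> verts ?P \<Longrightarrow> y \<in> verts ?P \<Longrightarrow> (x, y) \<in> (arcs ?P)\<^sup>*"
    using connected_transfer[OF wG cG f1] .
  have connQ: "\<And>x y. x \<in> verts ?Q \<Longrightarrow> y \<in> verts ?Q \<Longrightarrow> (x, y) \<in> (arcs ?Q)\<^sup>*"
    using connected_transfer[OF wG cG f2] .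
  obtain u0 where u0: "u0 \<in> verts G" using cG unfolding sconnected_def by blast
  define v0 where "v0 = f1 u0"
  have v0: "v0 \<in> verts ?P" unfolding v0_def using svD(1)[OF f1] u0 bij_betwE by blast
  have hv0: "h v0 \<in> verts ?Q" using hV[OF v0] .
  have n: "0 < length As"
  proof -
    obtain p q where pq: "(p, q) \<in> arcs G" using assms(3) by auto
    have "p \<in> verts G" "q \<in> verts G" using wf_arcsV[OF wG pq] by auto
    hence "(f1 p, f1 q) \<in> arcs ?P" using svD(3)[OF f1] pq by blast
    then obtain k where "k < length As" by (rule sl_arcsE) (rule that)
    thus ?thesis by (rule le_less_trans[OF le0])
  qed
  have cfA: "\<And>k a b. k < length As \<Longrightarrow> a \<in> verts (As ! k) \<Longrightarrow> b \<in> verts (As ! k) \<Longrightarrow> (a, b) \<in> (arcs (As ! k))\<^sup>*"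
    using factor_connected[OF wA _ v0] connP by blast
  have cfB: "\<And>k a b. k < length Bs \<Longrightarrow> a \<in> verts (Bs ! k) \<Longrightarrow> b \<in> verts (Bs ! k) \<Longrightarrow> (a, b) \<in> (arcs (Bs ! k))\<^sup>*"
    using factor_connected[OF wB _ hv0] connQ by blast
  have cA: "\<And>k. k < length As \<Longrightarrow> 2 \<le> card (verts (As ! k))"
  proof -
    fix k assume k: "k < length As"
    have "wf_sgraph (As ! k)" using wA k by simp
    thus "2 \<le> card (verts (As ! k))" using card2_of_arc As(5)[OF k] by blast
  qed
  have cB: "\<And>k. k < length Bs \<Longrightarrow> 2 \<le> card (verts (Bs ! k))"
  proof -
    fix k assume k: "k < length Bs"
    have "wf_sgraph (Bs ! k)" using wB k by simp
    thus "2 \<le> card (verts (Bs ! k))" using card2_of_arc Bs(5)[OF k] by blast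
  qed
  obtain j0 where j0: "j0 < length Bs" "\<And>v. v \<in> verts ?P \<Longrightarrow> h ` layer As 0 v = layer Bs j0 (h v)"
    using const_layers[OF wA wB s As(4) Bs(4) cfA cfB cA cB n v0 connP] by blast
  let ?CA = "colayer As 0 v0" and ?CB = "colayer Bs j0 (h v0)"
  have CA: "?CA = {x. (v0, x) \<in> (nrel As 0)\<^sup>*}" using colayer_reach[OF wA cfA n v0] .
  have CB: "?CB = {x. (h v0, x) \<in> (nrel Bs j0)\<^sup>*}" using colayer_reach[OF wB cfB j0(1) hv0] .
  have clP: "\<And>x y. (x, y) \<in> arcs ?P \<Longrightarrow> x \<in> verts ?P \<and> y \<in> verts ?P"
    using closed_sl[of As] unfolding closed_sg_def by blast
  have clQ: "\<And>x y. (x, y) \<in> arcs ?Q \<Longrightarrow> x \<in> verts ?Q \<and> y \<in> verts ?Q"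
    using closed_sl[of Bs] unfolding closed_sg_def by blast
  have ncorr: "\<And>p q. p \<in> verts ?P \<Longrightarrow> q \<in> verts ?P \<Longrightarrow> (p, q) \<in> nrel As 0 \<longleftrightarrow> (h p, h q) \<in> nrel Bs j0"
  proof -
    fix p q assume p: "p \<in> verts ?P" and q: "q \<in> verts ?P"
    have lay: "q \<in> layer As 0 p \<longleftrightarrow> h q \<in> layer Bs j0 (h p)"
    proof
      assume "q \<in> layer As 0 p"
      hence "h q \<in> h ` layer As 0 p" by (rule imageI)
      thus "h q \<in> layer Bs j0 (h p)" using j0(2)[OF p] by simp
    next
      assume "h q \<in> layer Bs j0 (h p)"
      hence "h q \<in> h ` layer As 0 p" using j0(2)[OF p] by simp
      then obtain q' where q': "q' \<in> layer As 0 p" "h q = h q'" by blast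
      have "q' \<in> verts ?P" using subsetD[OF layer_sub q'(1)] .
      hence "q = q'" using q'(2) hinj q by (meson inj_onD)
      thus "q \<in> layer As 0 p" using q' by simp
    qed
    show "(p, q) \<in> nrel As 0 \<longleftrightarrow> (h p, h q) \<in> nrel Bs j0"
    proof
      assume a: "(p, q) \<in> nrel As 0"
      hence a1: "(p, q) \<in> arcs ?P" "p ! 0 = q ! 0" unfolding nrel_def by auto
      have b1: "(h p, h q) \<in> arcs ?Q" using ar[OF p q] a1(1) by simp
      have "q \<notin> layer As 0 p" using nrel_layer[OF wA a1(1) n] a1(2) by simp
      hence "h q \<notin> layer Bs j0 (h p)" using lay by simp
      hence "h p ! j0 = h q ! j0" using nrel_layer[OF wB b1 j0(1)] by simp
      thus "(h p, h q) \<in> nrel Bs j0" unfolding nrel_def using b1 by simp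
    next
      assume b: "(h p, h q) \<in> nrel Bs j0"
      hence b1: "(h p, h q) \<in> arcs ?Q" "h p ! j0 = h q ! j0" unfolding nrel_def by auto
      have a1: "(p, q) \<in> arcs ?P" using ar[OF p q] b1(1) by simp
      have "h q \<notin> layer Bs j0 (h p)" using nrel_layer[OF wB b1(1) j0(1)] b1(2) by simp
      hence "q \<notin> layer As 0 p" using lay by simp
      hence "p ! 0 = q ! 0" using nrel_layer[OF wA a1 n] by simp
      thus "(p, q) \<in> nrel As 0" unfolding nrel_def using a1 by simp
    qed
  qed
  let ?g = "inv_into (verts ?P) h"
  have gV: "\<And>y. y \<in> verts ?Q \<Longrightarrow> ?g y \<in> verts ?P" using bij_betw_inv_into[OF hb] bij_betwE by blast
  have hg: "\<And>y. y \<in> verts ?Q \<Longrightarrow> h (?g y) = y" using f_inv_into_f himg by metis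
  have gh: "\<And>x. x \<in> verts ?P \<Longrightarrow> ?g (h x) = x" using inv_into_f_f[OF hinj] .
  have imgC: "h ` ?CA = ?CB"
  proof
    show "h ` ?CA \<subseteq> ?CB"
    proof
      fix y assume "y \<in> h ` ?CA"
      then obtain x where x: "x \<in> ?CA" "y = h x" by blast
      have "(v0, x) \<in> (nrel As 0)\<^sup>*" using x CA by simp
      moreover have "\<And>p q. (p, q) \<in> nrel As 0 \<Longrightarrow> (h p, h q) \<in> nrel Bs j0"
      proof -
        fix p q assume a: "(p, q) \<in> nrel As 0"
        hence "p \<in> verts ?P" "q \<in> verts ?P" using clP unfolding nrel_def by auto
        thus "(h p, h q) \<in> nrel Bs j0" using ncorr a by blast
      qed
      ultimately have "(h v0, h x) \<in> (nrel Bs j0)\<^sup>*" by (rule rtrancl_map_gen)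
      thus "y \<in> ?CB" using x CB by simp
    qed
    show "?CB \<subseteq> h ` ?CA"
    proof
      fix y assume y: "y \<in> ?CB"
      have yV: "y \<in> verts ?Q" using y unfolding colayer_def by blast
      have "(h v0, y) \<in> (nrel Bs j0)\<^sup>*" using y CB by simp
      moreover have "\<And>p q. (p, q) \<in> nrel Bs j0 \<Longrightarrow> (?g p, ?g q) \<in> nrel As 0"
      proof -
        fix p q assume a: "(p, q) \<in> nrel Bs j0"
        hence pq: "p \<in> verts ?Q" "q \<in> verts ?Q" using clQ unfolding nrel_def by auto
        have "(h (?g p), h (?g q)) \<in> nrel Bs j0" using a hg pq by simp
        thus "(?g p, ?g q) \<in> nrel As 0" using ncorr gV pq by blast
      qed
      ultimately have "(?g (h v0), ?g y) \<in> (nrel As 0)\<^sup>*" by (rule rtrancl_map_gen)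
      hence "?g y \<in> ?CA" using CA gh[OF v0] by simp
      hence "h (?g y) \<in> h ` ?CA" by (rule imageI)
      thus "y \<in> h ` ?CA" using hg[OF yV] by simp
    qed
  qed
  have wX: "wf_sgraph (As ! 0)" using wA n by simp
  have wBj: "wf_sgraph (Bs ! j0)" using wB j0(1) by simp
  have LV: "layer As 0 v0 \<subseteq> verts ?P" by (rule layer_sub)
  have "sequiv (induce ?P (layer As 0 v0)) (As ! 0)" unfolding sequiv_sv by (intro exI, rule layer_iso[OF wA n v0])
  hence e1: "sequiv (As ! 0) (induce ?P (layer As 0 v0))" by (rule sequiv_sym[OF wf_closed[OF wX]])
  have "sequiv (induce ?P (layer As 0 v0)) (induce ?Q (h ` layer As 0 v0))"
    unfolding sequiv_sv by (intro exI, rule sv_induce[OF s LV])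
  hence e2: "sequiv (induce ?P (layer As 0 v0)) (induce ?Q (layer Bs j0 (h v0)))" using j0(2)[OF v0] by simp
  have e3: "sequiv (induce ?Q (layer Bs j0 (h v0))) (Bs ! j0)" unfolding sequiv_sv by (intro exI, rule layer_iso[OF wB j0(1) hv0])
  have eX: "sequiv (As ! 0) (Bs ! j0)"
    using sequiv_trans[OF wf_closed[OF wX] e1 sequiv_trans[OF closed_induce e2 e3]] .
  have eXB: "sequiv (Bs ! j0) (As ! 0)" using sequiv_sym[OF wf_closed[OF wBj] eX] .
  let ?R = "sprod_list (tl As)"
  have AsNe: "As \<noteq> []" using n by auto
  have wR: "wf_sgraph ?R" using wf_sl wA by (metis list.set_sel(2) AsNe)
  have c1': "sequiv (induce ?P ?CA) ?R" using colayer0_iso[OF wA AsNe v0] .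
  have c1: "sequiv ?R (induce ?P ?CA)" using sequiv_sym[OF closed_sl c1'] .
  have CAV: "?CA \<subseteq> verts ?P" unfolding colayer_def by blast
  have "sequiv (induce ?P ?CA) (induce ?Q (h ` ?CA))" unfolding sequiv_sv by (intro exI, rule sv_induce[OF s CAV])
  hence c2: "sequiv (induce ?P ?CA) (induce ?Q ?CB)" using imgC by simp
  let ?\<sigma> = "transpose 0 j0"
  let ?Bs' = "permute_list ?\<sigma> Bs"
  have nB: "0 < length Bs" by (rule le_less_trans[OF le0 j0(1)])
  have sig: "?\<sigma> permutes {..<length Bs}" by (intro permutes_swap_id) (use nB j0(1) in simp_all)
  have s0: "?\<sigma> 0 = j0" by simp
  have c3: "sequiv (induce ?Q ?CB) (induce (sprod_list ?Bs') (colayer ?Bs' 0 (permute_list ?\<sigma> (h v0))))"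
    using colayer_perm[OF sig wB nB hv0] s0 by simp
  have setB: "set ?Bs' = set Bs" using mset_permute_list[OF sig] by (metis set_mset_mset)
  have wB': "wfall ?Bs'" using wB setB by simp
  have Bs'ne: "?Bs' \<noteq> []"
  proof
    assume "?Bs' = []"
    hence "length ?Bs' = 0" by (simp only: list.size(3))
    thus False using nB by simp
  qed
  have pv: "permute_list ?\<sigma> (h v0) \<in> verts (sprod_list ?Bs')" using svD(1)[OF perm_iso[OF sig wB]] hv0 bij_betwE by blast
  have c4: "sequiv (induce (sprod_list ?Bs') (colayer ?Bs' 0 (permute_list ?\<sigma> (h v0)))) (sprod_list (tl ?Bs'))"
    using colayer0_iso[OF wB' Bs'ne pv] .
  have eR: "sequiv ?R (sprod_list (tl ?Bs'))"
    using sequiv_trans[OF wf_closed[OF wR] c1 sequiv_trans[OF closed_induce c2 sequiv_trans[OF closed_induce c3 c4]]] .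
  obtain Y :: "nat sgraph" and g where Y: "wf_sgraph Y" "sv g {} ?R Y"
    using nat_copy[OF wR] by blast
  have eYR: "sequiv Y ?R" using sequiv_sym[OF wf_closed[OF Y(1)] sequiv_of_sv[OF Y(2)]] .
  have Asf: "As = As ! 0 # tl As" using AsNe by (cases As) auto
  have wtl: "wfall (tl As)" using wA by (metis list.set_sel(2) AsNe)
  have sp: "sequiv ?P (sprod (As ! 0) ?R)"
    using sequiv_of_sv[OF split_iso[OF wX wtl]] Asf by metis
  have spY: "sequiv (sprod (As ! 0) ?R) (sprod (As ! 0) Y)"
    using sequiv_of_sv[OF sprod_cong[OF wX wR sv_refl Y(2)]] .
  have eG: "sequiv G (sprod (As ! 0) Y)"
    using sequiv_trans[OF wf_closed[OF wG] As(2) sequiv_trans[OF closed_sl sp spY]] .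
  have D1e: "D1 = add_mset (As ! 0) (mset (tl As))" using As(1) Asf by (metis mset.simps(2))
  have m1: "mset_sequiv D1 (add_mset (As ! 0) (mset (tl As)))"
    unfolding D1e by (rule rel_mset_refl_on) (rule sequiv_refl)
  have B0: "?Bs' ! 0 = Bs ! j0" using pl_nth[OF sig refl nB] s0 by simp
  have Bsf: "?Bs' = Bs ! j0 # tl ?Bs'" using Bs'ne B0 by (cases ?Bs') auto
  have D2e: "D2 = add_mset (Bs ! j0) (mset (tl ?Bs'))"
  proof -
    have "D2 = mset ?Bs'" using Bs(1) mset_permute_list[OF sig] by simp
    also have "\<dots> = add_mset (Bs ! j0) (mset (tl ?Bs'))" by (subst Bsf) simp
    finally show ?thesis .
  qed
  have m2: "mset_sequiv D2 (add_mset (As ! 0) (mset (tl ?Bs')))"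
    unfolding D2e by (rule rel_mset_Plus[where R = sequiv, OF eXB]) (rule rel_mset_refl_on, rule sequiv_refl)
  have sd1: "s_decomposition (mset (tl As)) Y"
    unfolding s_decomposition_def
  proof (intro conjI)
    show "\<forall>H\<in>#mset (tl As). wf_sgraph H \<and> arcs H \<noteq> {}"
      using As(6) by (metis list.set_sel(2) AsNe set_mset_mset)
    show "\<exists>Hs. mset Hs = mset (tl As) \<and> sequiv Y (sprod_list Hs)" using eYR by blast
  qed
  have sd2: "s_decomposition (mset (tl ?Bs')) Y"
    unfolding s_decomposition_def
  proof (intro conjI)
    show "\<forall>H\<in>#mset (tl ?Bs'). wf_sgraph H \<and> arcs H \<noteq> {}"
      using Bs(6) setB by (metis list.set_sel(2) Bs'ne set_mset_mset)
    have "sequiv Y (sprod_list (tl ?Bs'))" using sequiv_trans[OF wf_closed[OF Y(1)] eYR eR] .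
    thus "\<exists>Hs. mset Hs = mset (tl ?Bs') \<and> sequiv Y (sprod_list Hs)" by blast
  qed
  show ?thesis using wX Y(1) eG m1 m2 sd1 sd2 by blast
qed

end
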